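(* Let $X$ be a compact metric space, $T\colon X\to X$ a homeomorphism and $\mu$ an ergodic $T$-invariant Borel probability measure. Let $H\colon X\to\mathbb{GL}^+(2,\mathbb{R})$ be continuous of the form $H(x)=\begin{pmatrix}\lambda(x)&0\\ \sigma(x)&\eta(x)\end{pmatrix}$ with $\eta(x)>0$, such that the cocycle $H$ over $T$ has dominated splitting $\mathbb{R}^2=E(x)\oplus F(x)$ with dominating direction $F(x)=\mathrm{span}(\mathbf{e}_2)$, $\mathbf{e}_2=(0,1)$. Let $H_\theta(x)=H(x)R_\theta=\begin{pmatrix}a_\theta(x)&b_\theta(x)\\ c_\theta(x)&d_\theta(x)\end{pmatrix}$. Suppose $\varepsilon_0>0$ is such that for $|\theta|<\varepsilon_0$ the cocycle $H_\theta$ has dominated splitting $E_\theta(x)\oplus F_\theta(x)$ with dominating direction $F_\theta(x)=\mathrm{span}((u_\theta(x),1))$, where $(\theta,x)\mapsto u_\theta(x)$ is continuous and $u_0\equiv0$. Write $\lambda^+(\theta)=\lambda^+(H_\theta)$ and $\lambda^-(0)=\lambda^-(H)$. Then there exists $\varepsilon>0$ such that for $|\theta|<\varepsilon$, $$\lambda^+(\theta)=\lambda^+(0)+\lambda^-(0)-\int_X\log\bigl(a_\theta(x)-c_\theta(x)u_\theta(Tx)\bigr)\,d\mu(x).$$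
   Context: $R_\theta$: rotation by angle $\theta$. For continuous $B\colon X\to\mathbb{GL}(2,\mathbb{R})$: cocycle $(x,v)\mapsto(Tx,B(x)v)$, $B^n(x)=B(T^{n-1}x)\cdots B(x)$, $B^{-n}(x)=B(T^{-n}x)^{-1}\cdots B(T^{-1}x)^{-1}$, $\lambda^+(B)=\lim\frac1n\log\|B^n(x)\|$, $\lambda^-(B)=\lim\frac1n\log\|B^{-n}(x)\|^{-1}$ ($\mu$-a.e. constant). Dominated splitting: continuous invariant decomposition $\mathbb{R}^2=E(x)\oplus F(x)$ into lines and an integer $l\ge1$ with $\|B^l(x)|_{E(x)}\|\cdot\|B^{-l}(T^lx)|_{F(T^lx)}\|<\tfrac12$ for all $x$; $F$ is called the dominating direction. *)

theory Defs
  imports "HOL-Probability.Probability"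
begin

type_synonym mat2 = "real^2^2"

definition rot :: "real \<Rightarrow> mat2" where
  "rot \<theta> = (\<chi> i j. if i = 1 then (if j = 1 then cos \<theta> else - sin \<theta>)
                       else (if j = 1 then sin \<theta> else cos \<theta>))"

definition mnorm :: "mat2 \<Rightarrow> real" where
  "mnorm A = onorm (\<lambda>v. A *v v)"

definition restr_norm :: "mat2 \<Rightarrow> (real^2) set \<Rightarrow> real" where
  "restr_norm A L = Sup {norm (A *v v) | v. v \<in> L \<and> norm v = 1}"

fun cocyc :: "('a \<Rightarrow> 'a) \<Rightarrow> ('a \<Rightarrow> mat2) \<Rightarrow> nat \<Rightarrow> 'a \<Rightarrow> mat2" where
  "cocyc T B 0 x = mat 1"
| "cocyc T B (Suc n) x = B ((T ^^ n) x) ** cocyc T B n x"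

fun cocyc_inv :: "('a \<Rightarrow> 'a) \<Rightarrow> ('a \<Rightarrow> mat2) \<Rightarrow> nat \<Rightarrow> 'a \<Rightarrow> mat2" where
  "cocyc_inv T B 0 x = mat 1"
| "cocyc_inv T B (Suc n) x = matrix_inv (B ((inv T ^^ Suc n) x)) ** cocyc_inv T B n x"

definition lyap_plus :: "'a measure \<Rightarrow> ('a \<Rightarrow> 'a) \<Rightarrow> ('a \<Rightarrow> mat2) \<Rightarrow> real" where
  "lyap_plus M T B = (THE c. AE x in M.
      (\<lambda>n. ln (mnorm (cocyc T B n x)) / real n) \<longlonglongrightarrow> c)"

definition lyap_minus :: "'a measure \<Rightarrow> ('a \<Rightarrow> 'a) \<Rightarrow> ('a \<Rightarrow> mat2) \<Rightarrow> real" where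
  "lyap_minus M T B = (THE c. AE x in M.
      (\<lambda>n. ln (inverse (mnorm (cocyc_inv T B n x))) / real n) \<longlonglongrightarrow> c)"

definition is_line :: "(real^2) set \<Rightarrow> bool" where
  "is_line L \<longleftrightarrow> subspace L \<and> dim L = 1"

definition continuous_line_field :: "('a::topological_space \<Rightarrow> (real^2) set) \<Rightarrow> bool" where
  "continuous_line_field E \<longleftrightarrow> (\<forall>x. is_line (E x)) \<and>
     (\<forall>x. \<exists>U v. open U \<and> x \<in> U \<and> continuous_on U v \<and>
          (\<forall>y\<in>U. v y \<noteq> 0 \<and> E y = span {v y}))"

definition dominated_splitting ::
  "('a::topological_space \<Rightarrow> 'a) \<Rightarrow> ('a \<Rightarrow> mat2) \<Rightarrow> ('a \<Rightarrow> (real^2) set) \<Rightarrow> ('a \<Rightarrow> (real^2) set) \<Rightarrow> bool" where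
  "dominated_splitting T B E F \<longleftrightarrow>
     continuous_line_field E \<and> continuous_line_field F \<and>
     (\<forall>x. E x \<inter> F x = {0}) \<and>
     (\<forall>x. (\<lambda>v. B x *v v) ` E x = E (T x) \<and> (\<lambda>v. B x *v v) ` F x = F (T x)) \<and>
     (\<exists>l::nat. l \<ge> 1 \<and> (\<forall>x. restr_norm (cocyc T B l x) (E x) *
         restr_norm (cocyc_inv T B l ((T ^^ l) x)) (F ((T ^^ l) x)) < 1/2))"

definition ergodic_mp :: "'a measure \<Rightarrow> ('a \<Rightarrow> 'a) \<Rightarrow> bool" where
  "ergodic_mp M T \<longleftrightarrow> T \<in> measurable M M \<and>
     (\<forall>A\<in>sets M. measure M (T -` A \<inter> space M) = measure M A) \<and>
     (\<forall>A\<in>sets M. T -` A \<inter> space M = A \<longrightarrow> measure M A = 0 \<or> measure M A = 1)"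

end

theory Submission
  imports Defs
begin


locale erg = prob_space M for M :: "'a measure" +
  fixes T :: "'a \<Rightarrow> 'a"
  assumes sp: "space M = UNIV" and erg: "ergodic_mp M T"
begin

lemma Tmeas[measurable]: "T \<in> measurable M M"
  using erg by (simp add: ergodic_mp_def)

lemma Tpres: "A \<in> sets M \<Longrightarrow> measure M (T -` A) = measure M A"
  using erg by (simp add: ergodic_mp_def sp)

lemma Terg: "A \<in> sets M \<Longrightarrow> T -` A = A \<Longrightarrow> measure M A = 0 \<or> measure M A = 1"
  using erg by (simp add: ergodic_mp_def sp)

lemma distrT: "distr M M T = M"
proof (rule measure_eqI)
  show "sets (distr M M T) = sets M" by simp
  fix A assume A: "A \<in> sets (distr M M T)"
  then have A': "A \<in> sets M" by simp
  have "emeasure (distr M M T) A = emeasure M (T -` A \<inter> space M)"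
    using A' by (simp add: emeasure_distr)
  also have "\<dots> = emeasure M A"
    using Tpres[OF A'] measurable_sets[OF Tmeas A'] by (simp add: emeasure_eq_measure sp)
  finally show "emeasure (distr M M T) A = emeasure M A" .
qed

lemma integral_T:
  fixes g :: "'a \<Rightarrow> real"
  assumes [measurable]: "g \<in> borel_measurable M"
  shows "(\<integral>x. g (T x) \<partial>M) = (\<integral>x. g x \<partial>M)"
proof -
  have "(\<integral>x. g (T x) \<partial>M) = integral\<^sup>L (distr M M T) g"
    using integral_distr[of T M M g] assms by simp
  then show ?thesis by (simp add: distrT)
qed

definition S :: "('a \<Rightarrow> real) \<Rightarrow> nat \<Rightarrow> 'a \<Rightarrow> real" where
  "S h k x = (\<Sum>i<k. h ((T^^i) x))"

lemma S_meas[measurable]: "h \<in> borel_measurable M \<Longrightarrow> S h k \<in> borel_measurable M"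
proof -
  assume [measurable]: "h \<in> borel_measurable M"
  have [measurable]: "\<And>i. (\<lambda>x. h ((T ^^ i) x)) \<in> borel_measurable M"
    using measurable_compose[OF measurable_compose_n[OF Tmeas]] by auto
  show ?thesis unfolding S_def by measurable
qed

lemma S_0[simp]: "S h 0 x = 0" by (simp add: S_def)

lemma S_Suc: "S h (Suc k) x = h x + S h k (T x)"
  unfolding S_def sum.lessThan_Suc_shift by (simp add: funpow_Suc_right del: funpow.simps)

lemma S_bound: "(\<And>x. \<bar>h x\<bar> \<le> B) \<Longrightarrow> \<bar>S h k x\<bar> \<le> real k * B"
proof (induction k arbitrary: x)
  case 0 then show ?case by simp
next
  case (Suc k)
  have "\<bar>S h (Suc k) x\<bar> \<le> \<bar>h x\<bar> + \<bar>S h k (T x)\<bar>" by (simp add: S_Suc)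
  also have "\<dots> \<le> B + real k * B" using Suc by (intro add_mono) auto
  finally show ?case by (simp add: algebra_simps)
qed

fun F :: "('a \<Rightarrow> real) \<Rightarrow> nat \<Rightarrow> 'a \<Rightarrow> real" where
  "F h 0 x = 0"
| "F h (Suc N) x = max (F h N x) (S h (Suc N) x)"

lemma F_0': "F h 0 = (\<lambda>x. 0)" by auto
lemma F_Suc': "F h (Suc N) = (\<lambda>x. max (F h N x) (S h (Suc N) x))" by auto

lemma F_meas[measurable]: "h \<in> borel_measurable M \<Longrightarrow> F h N \<in> borel_measurable M"
proof (induction N)
  case 0 then show ?case by (simp only: F_0') simp
next
  case (Suc N)
  then show ?case unfolding F_Suc' by (intro borel_measurable_max) auto
qed

lemma F_nonneg: "F h N x \<ge> 0"
  by (induction N) auto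

lemma F_ge: "k \<le> N \<Longrightarrow> S h k x \<le> F h N x"
proof (induction N)
  case 0 then show ?case by simp
next
  case (Suc N) then show ?case by (cases "k = Suc N") auto
qed

lemma F_attained: "F h N x > 0 \<Longrightarrow> \<exists>k. 1 \<le> k \<and> k \<le> N \<and> F h N x = S h k x"
proof (induction N)
  case 0 then show ?case by simp
next
  case (Suc N)
  show ?case
  proof (cases "S h (Suc N) x \<le> F h N x")
    case True
    then have "F h N x > 0" using Suc.prems by simp
    with Suc.IH True show ?thesis by (auto intro: le_SucI)
  next
    case False then show ?thesis by (intro exI[of _ "Suc N"]) auto
  qed
qed

lemma F_bound: "(\<And>x. \<bar>h x\<bar> \<le> B) \<Longrightarrow> \<bar>F h N x\<bar> \<le> real N * \<bar>B\<bar>"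
proof (induction N)
  case 0 then show ?case by simp
next
  case (Suc N)
  have "\<bar>S h (Suc N) x\<bar> \<le> real (Suc N) * \<bar>B\<bar>"
    using S_bound[of h "\<bar>B\<bar>" "Suc N" x] Suc.prems by (meson abs_ge_self order_trans)
  moreover have "real N * \<bar>B\<bar> \<le> real (Suc N) * \<bar>B\<bar>" by (intro mult_right_mono) auto
  moreover have "\<bar>F h N x\<bar> \<le> real (Suc N) * \<bar>B\<bar>"
    using Suc.IH[OF Suc.prems] calculation(2) by linarith
  ultimately show ?case by auto
qed

lemma F_key: "indicator {x. F h N x > 0} x * h x \<ge> F h N x - F h N (T x)"
proof (cases "F h N x > 0")
  case True
  then obtain k where k: "1 \<le> k" "k \<le> N" "F h N x = S h k x" using F_attained by blast
  then obtain k' where k': "k = Suc k'" by (cases k) auto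
  have "S h k' (T x) \<le> F h N (T x)" using F_ge k k' by simp
  then show ?thesis using True k k' by (simp add: S_Suc)
next
  case False
  then show ?thesis using F_nonneg[of h N x] F_nonneg[of h N "T x"] by simp
qed

lemma maximal_N:
  assumes [measurable]: "h \<in> borel_measurable M" and hb: "\<And>x. \<bar>h x\<bar> \<le> B"
  shows "(\<integral>x. indicator {x. F h N x > 0} x * h x \<partial>M) \<ge> 0"
proof -
  have hb': "\<bar>h x\<bar> \<le> \<bar>B\<bar>" for x using hb[of x] by linarith
  have intF: "integrable M (F h N)"
    by (rule integrable_const_bound[where B="real N * \<bar>B\<bar>"]) (auto intro: F_bound hb)
  have intFT: "integrable M (\<lambda>x. F h N (T x))"
    by (rule integrable_const_bound[where B="real N * \<bar>B\<bar>"]) (auto intro: F_bound hb)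
  have inti: "integrable M (\<lambda>x. indicator {x. F h N x > 0} x * h x)"
    by (rule integrable_const_bound[where B="\<bar>B\<bar>"])
      (auto simp: indicator_def hb')
  have "0 = (\<integral>x. F h N x \<partial>M) - (\<integral>x. F h N (T x) \<partial>M)"
    by (simp add: integral_T)
  also have "\<dots> = (\<integral>x. F h N x - F h N (T x) \<partial>M)"
    using intF intFT by simp
  also have "\<dots> \<le> (\<integral>x. indicator {x. F h N x > 0} x * h x \<partial>M)"
    by (rule integral_mono[OF _ inti]) (use intF intFT F_key in auto)
  finally show ?thesis .
qed

lemma maximal:
  assumes [measurable]: "h \<in> borel_measurable M" and hb: "\<And>x. \<bar>h x\<bar> \<le> B"
  shows "(\<integral>x. indicator {x. \<exists>k. S h k x > 0} x * h x \<partial>M) \<ge> 0"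
proof -
  have hb': "\<bar>h x\<bar> \<le> \<bar>B\<bar>" for x using hb[of x] by linarith
  have ev: "(\<lambda>N. indicator {x. F h N x > 0} x * h x) \<longlonglongrightarrow> indicator {x. \<exists>k. S h k x > 0} x * h x" for x
  proof (cases "\<exists>k. S h k x > 0")
    case True
    then obtain k where k: "S h k x > 0" by blast
    have "eventually (\<lambda>N. indicator {x. F h N x > 0} x * h x = indicator {x. \<exists>k. S h k x > 0} x * h x) sequentially"
    proof (rule eventually_sequentiallyI[of k])
      fix N assume "k \<le> N"
      then have "F h N x > 0" using F_ge[of k N h x] k by linarith
      then show "indicator {x. F h N x > 0} x * h x = indicator {x. \<exists>k. S h k x > 0} x * h x"
        using True by (simp add: indicator_def)
    qed
    then show ?thesis by (rule tendsto_eventually)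
  next
    case False
    then have "\<not> 0 < F h N x" for N using F_attained[of h N x] False by (metis not_le)
    then show ?thesis using False by (simp add: indicator_def)
  qed
  have "(\<lambda>N. \<integral>x. indicator {x. F h N x > 0} x * h x \<partial>M) \<longlonglongrightarrow> (\<integral>x. indicator {x. \<exists>k. S h k x > 0} x * h x \<partial>M)"
  proof (rule integral_dominated_convergence[where w="\<lambda>x. \<bar>B\<bar>"])
    show "AE x in M. (\<lambda>N. indicator {x. F h N x > 0} x * h x) \<longlonglongrightarrow> indicator {x. \<exists>k. S h k x > 0} x * h x"
      using ev by simp
  qed (auto simp: indicator_def hb')
  then show ?thesis
    by (rule LIMSEQ_le_const) (use maximal_N[OF assms(1) hb] in blast)
qed


lemma S_diff: "S (\<lambda>x. f x - c) n x = S f n x - c * real n"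
  by (induction n arbitrary: x) (auto simp: S_Suc algebra_simps)

lemma S_neg: "S (\<lambda>x. - f x) n x = - S f n x"
  by (induction n arbitrary: x) (auto simp: S_Suc algebra_simps)

definition D :: "('a \<Rightarrow> real) \<Rightarrow> real \<Rightarrow> 'a set" where
  "D f c = {x. \<exists>j::nat. \<forall>m. \<exists>n. m \<le> n \<and> (c + 1 / real (Suc j)) * real n < S f n x}"

lemma D_meas:
  assumes [measurable]: "f \<in> borel_measurable M"
  shows "D f c \<in> sets M"
proof -
  have "D f c = {x \<in> space M. \<exists>j::nat. \<forall>m::nat. \<exists>n::nat. m \<le> n \<and> (c + 1 / real (Suc j)) * real n < S f n x}"
    by (simp add: D_def sp)
  also have "\<dots> \<in> sets M" by measurable
  finally show ?thesis .
qed

lemma N0_exists: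
  fixes d' :: real assumes "d' > 0"
  shows "\<exists>N0::nat. \<forall>n\<ge>N0. d' * real n \<ge> K"
proof -
  obtain N0 :: nat where "K / d' \<le> real N0" using real_arch_simple by blast
  then have "K \<le> d' * real N0" using assms by (simp add: field_simps)
  moreover have "\<And>n. n \<ge> N0 \<Longrightarrow> d' * real N0 \<le> d' * real n"
    using assms by (intro mult_left_mono) auto
  ultimately show ?thesis by (meson order_trans)
qed

lemma D_inv:
  assumes fb: "\<And>x. \<bar>f x\<bar> \<le> B"
  shows "T -` D f c = D f c"
proof (intro set_eqI iffI)
  fix x
  assume "x \<in> T -` D f c"
  then obtain j where P: "\<And>m. \<exists>n. m \<le> n \<and> (c + 1 / real (Suc j)) * real n < S f n (T x)"
    by (auto simp: D_def)
  define d where "d = 1 / real (Suc j)"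
  define d' where "d' = 1 / real (Suc (2*j+1))"
  have dd: "d = 2 * d'" "d' > 0" "d' \<le> 1" by (auto simp: d_def d'_def field_simps)
  obtain N0 where N0: "\<And>n. n \<ge> N0 \<Longrightarrow> d' * real n \<ge> \<bar>B\<bar> + \<bar>c\<bar> + 1"
    using N0_exists[OF dd(2)] by blast
  have "\<forall>m. \<exists>n. m \<le> n \<and> (c + d') * real n < S f n x"
  proof
    fix m
    obtain n where n: "max m N0 \<le> n" "(c + d) * real n < S f n (T x)" using P d_def by blast
    have "S f (Suc n) x = f x + S f n (T x)" by (simp add: S_Suc)
    moreover have "(c + d) * real n = (c + d') * real n + d' * real n" by (simp add: dd algebra_simps)
    moreover have "(c + d') * real (Suc n) = (c + d') * real n + c + d'" by (simp add: algebra_simps)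
    moreover have "d' * real n \<ge> \<bar>B\<bar> + \<bar>c\<bar> + 1" using N0 n by auto
    moreover have "\<bar>f x\<bar> \<le> B" by (rule fb)
    ultimately have "(c + d') * real (Suc n) < S f (Suc n) x" using n dd by linarith
    then show "\<exists>n. m \<le> n \<and> (c + d') * real n < S f n x" using n by (intro exI[of _ "Suc n"]) auto
  qed
  then show "x \<in> D f c" unfolding D_def d'_def by blast
next
  fix x
  assume "x \<in> D f c"
  then obtain j where P: "\<And>m. \<exists>n. m \<le> n \<and> (c + 1 / real (Suc j)) * real n < S f n x"
    by (auto simp: D_def)
  define d where "d = 1 / real (Suc j)"
  define d' where "d' = 1 / real (Suc (2*j+1))"
  have dd: "d = 2 * d'" "d' > 0" "d' \<le> 1" by (auto simp: d_def d'_def field_simps)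
  obtain N0 where N0: "\<And>n. n \<ge> N0 \<Longrightarrow> d' * real n \<ge> \<bar>B\<bar> + \<bar>c\<bar> + 1"
    using N0_exists[OF dd(2)] by blast
  have "\<forall>m. \<exists>n. m \<le> n \<and> (c + d') * real n < S f n (T x)"
  proof
    fix m
    obtain n' where n': "Suc (max m N0) \<le> n'" "(c + d) * real n' < S f n' x" using P d_def by blast
    then obtain n where nn: "n' = Suc n" by (cases n') auto
    have "S f (Suc n) x = f x + S f n (T x)" by (simp add: S_Suc)
    moreover have "(c + d) * real (Suc n) = (c + d') * real n + d' * real n + c + d" by (simp add: dd algebra_simps)
    moreover have "d' * real n \<ge> \<bar>B\<bar> + \<bar>c\<bar> + 1" using N0 n' nn by auto
    moreover have "\<bar>f x\<bar> \<le> B" by (rule fb)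
    moreover have "(c + d) * real (Suc n) < S f (Suc n) x" using n' nn by simp
    ultimately have "(c + d') * real n < S f n (T x)" using dd by linarith
    then show "\<exists>n. m \<le> n \<and> (c + d') * real n < S f n (T x)" using n' nn by (intro exI[of _ n]) auto
  qed
  then show "x \<in> T -` D f c" unfolding D_def d'_def by blast
qed

lemma D_null:
  assumes [measurable]: "f \<in> borel_measurable M" and fb: "\<And>x. \<bar>f x\<bar> \<le> B"
    and c: "c > expectation f"
  shows "measure M (D f c) = 0"
proof (rule ccontr)
  assume "measure M (D f c) \<noteq> 0"
  then have m1: "measure M (D f c) = 1" using Terg[OF D_meas[OF assms(1)] D_inv[OF fb]] by blast
  define h where "h x = f x - c" for x
  have hm[measurable]: "h \<in> borel_measurable M" unfolding h_def by measurable
  have hb: "\<bar>h x\<bar> \<le> \<bar>B\<bar> + \<bar>c\<bar>" for x using fb[of x] by (simp add: h_def)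
  have sub: "D f c \<subseteq> {x. \<exists>k. S h k x > 0}"
  proof
    fix x assume "x \<in> D f c"
    then obtain j n where "(c + 1 / real (Suc j)) * real n < S f n x" by (auto simp: D_def)
    moreover have "c * real n \<le> (c + 1 / real (Suc j)) * real n" by (intro mult_right_mono) auto
    ultimately have "S h n x > 0" unfolding h_def S_diff by linarith
    then show "x \<in> {x. \<exists>k. S h k x > 0}" by blast
  qed
  have "AE x in M. x \<in> D f c" using AE_prob_1[OF m1] .
  then have "AE x in M. indicator {x. \<exists>k. S h k x > 0} x * h x = h x"
    by eventually_elim (use sub in \<open>auto simp: indicator_def\<close>)
  then have "(\<integral>x. indicator {x. \<exists>k. S h k x > 0} x * h x \<partial>M) = (\<integral>x. h x \<partial>M)"
    by (intro integral_cong_AE) (auto simp: h_def)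
  also have intf: "integrable M f" by (rule integrable_const_bound[where B=B]) (auto simp: fb)
  then have "(\<integral>x. h x \<partial>M) = expectation f - c" by (simp add: h_def prob_space)
  finally have "0 \<le> expectation f - c" using maximal[OF hm hb] by simp
  then show False using c by simp
qed

lemma upper:
  assumes [measurable]: "f \<in> borel_measurable M" and fb: "\<And>x. \<bar>f x\<bar> \<le> B"
  shows "AE x in M. \<forall>e>0. \<exists>m. \<forall>n\<ge>m. S f n x \<le> (expectation f + e) * real n"
proof -
  let ?a = "expectation f"
  have "AE x in M. x \<notin> D f (?a + 1 / real (Suc i))" for i
  proof (rule AE_not_in)
    show "D f (?a + 1 / real (Suc i)) \<in> null_sets M"
      using D_null[OF assms, of "?a + 1 / real (Suc i)"] D_meas[OF assms(1)]
      by (simp add: emeasure_eq_measure null_setsI)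
  qed
  then have "AE x in M. \<forall>i. x \<notin> D f (?a + 1 / real (Suc i))" by (simp add: AE_all_countable)
  then show ?thesis
  proof eventually_elim
    case (elim x)
    show ?case
    proof (intro allI impI)
      fix e :: real assume "e > 0"
      then obtain i where i: "i > 0" "inverse (real i) < e / 2"
        using ex_inverse_of_nat_less[of "e/2"] by auto
      have "x \<notin> D f (?a + 1 / real (Suc i))" using elim by blast
      then have H: "\<not> (\<exists>j::nat. \<forall>m. \<exists>n. m \<le> n \<and> (?a + 1 / real (Suc i) + 1 / real (Suc j)) * real n < S f n x)"
        unfolding D_def mem_Collect_eq .
      then obtain m where m0: "\<forall>n\<ge>m. \<not> (?a + 1 / real (Suc i) + 1 / real (Suc i)) * real n < S f n x"
        by blast
      then have m: "\<forall>n\<ge>m. S f n x \<le> (?a + 1 / real (Suc i) + 1 / real (Suc i)) * real n"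
        by (simp add: not_less)
      have le: "1 / real (Suc i) < e / 2"
      proof -
        have "1 / real (Suc i) < 1 / real i" using i by (intro divide_strict_left_mono) auto
        then show ?thesis using i by (simp add: inverse_eq_divide)
      qed
      have "\<forall>n\<ge>m. S f n x \<le> (?a + e) * real n"
      proof (intro allI impI)
        fix n assume "m \<le> n"
        then have "S f n x \<le> (?a + 1 / real (Suc i) + 1 / real (Suc i)) * real n" using m by blast
        also have "\<dots> \<le> (?a + e) * real n" using le by (intro mult_right_mono) auto
        finally show "S f n x \<le> (?a + e) * real n" .
      qed
      then show "\<exists>m. \<forall>n\<ge>m. S f n x \<le> (?a + e) * real n" by blast
    qed
  qed
qed

lemma birkhoff:
  assumes [measurable]: "f \<in> borel_measurable M" and fb: "\<And>x. \<bar>f x\<bar> \<le> B"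
  shows "AE x in M. (\<lambda>n. S f n x / real n) \<longlonglongrightarrow> expectation f"
proof -
  have fb': "\<bar>- f x\<bar> \<le> B" for x using fb[of x] by simp
  have intf: "integrable M f" by (rule integrable_const_bound[where B=B]) (auto simp: fb)
  have eneg: "expectation (\<lambda>x. - f x) = - expectation f" by simp
  have "AE x in M. \<forall>e>0. \<exists>m. \<forall>n\<ge>m. S (\<lambda>x. - f x) n x \<le> (expectation (\<lambda>x. - f x) + e) * real n"
    by (rule upper[OF _ fb']) measurable
  then have lo: "AE x in M. \<forall>e>0. \<exists>m. \<forall>n\<ge>m. S f n x \<ge> (expectation f - e) * real n"
    unfolding eneg S_neg by (auto simp: algebra_simps)
  with upper[OF assms] show ?thesis
  proof eventually_elim
    case (elim x)
    let ?a = "expectation f"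
    show ?case
    proof (rule order_tendstoI)
      fix y assume "y < ?a"
      then obtain m where m: "\<forall>n\<ge>m. S f n x \<ge> (?a - (?a - y)/2) * real n" using elim(2)
        by (meson half_gt_zero_iff diff_gt_0_iff_gt)
      show "eventually (\<lambda>n. y < S f n x / real n) sequentially"
      proof (rule eventually_sequentiallyI[of "Suc m"])
        fix n assume n: "Suc m \<le> n"
        then have "(?a - (?a - y)/2) * real n \<le> S f n x" using m by auto
        moreover have "y < ?a - (?a - y)/2" using \<open>y < ?a\<close> by (simp add: field_simps)
        moreover have "y * real n < (?a - (?a - y)/2) * real n"
          using n calculation(2) by (intro mult_strict_right_mono) auto
        ultimately have "y * real n < S f n x" by linarith
        then show "y < S f n x / real n" using n by (simp add: field_simps)
      qed
    next
      fix y assume "y > ?a"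
      then obtain m where m: "\<forall>n\<ge>m. S f n x \<le> (?a + (y - ?a)/2) * real n" using elim(1)
        by (meson half_gt_zero_iff diff_gt_0_iff_gt)
      show "eventually (\<lambda>n. S f n x / real n < y) sequentially"
      proof (rule eventually_sequentiallyI[of "Suc m"])
        fix n assume n: "Suc m \<le> n"
        then have "S f n x \<le> (?a + (y - ?a)/2) * real n" using m by auto
        moreover have "?a + (y - ?a)/2 < y" using \<open>y > ?a\<close> by (simp add: field_simps)
        moreover have "(?a + (y - ?a)/2) * real n < y * real n"
          using n calculation(2) by (intro mult_strict_right_mono) auto
        ultimately have "S f n x < y * real n" by linarith
        then show "S f n x / real n < y" using n by (simp add: field_simps)
      qed
    qed
  qed
qed

end


lemma mat2_eq: "(A::real^2^2) = B \<longleftrightarrow> A$1$1 = B$1$1 \<and> A$1$2 = B$1$2 \<and> A$2$1 = B$2$1 \<and> A$2$2 = B$2$2"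
  by (auto simp: vec_eq_iff forall_2)

lemma mmul2: "((A::real^2^2) ** B) $ i $ j = A$i$1 * B$1$j + A$i$2 * B$2$j"
  by (simp add: matrix_matrix_mult_def sum_2)

lemma mvmul2: "((A::real^2^2) *v z) $ i = A$i$1 * z$1 + A$i$2 * z$2"
  by (simp add: matrix_vector_mult_def sum_2)

lemma norm2: "norm (z::real^2) = sqrt ((z$1)^2 + (z$2)^2)"
  by (simp add: norm_vec_def L2_set_def sum_2)

lemma vec2_eq: "(z::real^2) = y \<longleftrightarrow> z$1 = y$1 \<and> z$2 = y$2"
  by (auto simp: vec_eq_iff forall_2)

lemma vector2[simp]: "(vector [a, b] :: real^2) $ 1 = a" "(vector [a, b] :: real^2) $ 2 = b"
  by auto

lemma mat1_2[simp]: "(mat 1 :: real^2^2)$1$1 = 1" "(mat 1 :: real^2^2)$1$2 = 0"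
   "(mat 1 :: real^2^2)$2$1 = 0" "(mat 1 :: real^2^2)$2$2 = 1"
  by (auto simp: mat_def)

lemma norm2_le: "norm (z::real^2) \<le> \<bar>z$1\<bar> + \<bar>z$2\<bar>"
proof -
  have e: "(\<bar>z$1\<bar> + \<bar>z$2\<bar>)^2 = (z$1)^2 + (z$2)^2 + 2*(\<bar>z$1\<bar>*\<bar>z$2\<bar>)"
    by (simp add: power2_eq_square algebra_simps)
  have "0 \<le> \<bar>z$1\<bar>*\<bar>z$2\<bar>" by simp
  then have "sqrt ((z$1)^2 + (z$2)^2) \<le> sqrt ((\<bar>z$1\<bar> + \<bar>z$2\<bar>)^2)"
    using e by (intro real_sqrt_le_mono) linarith
  then show ?thesis by (simp add: norm2)
qed

definition det2 :: "real^2 \<Rightarrow> real^2 \<Rightarrow> real" where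
  "det2 p q = p$1 * q$2 - p$2 * q$1"

lemma det2_bound: "\<bar>det2 p q\<bar> \<le> norm p * norm q"
proof -
  have e: "((p$1)^2 + (p$2)^2) * ((q$1)^2 + (q$2)^2) - (det2 p q)^2 = (p$1 * q$1 + p$2 * q$2)^2"
    unfolding det2_def by (simp add: power2_eq_square algebra_simps)
  have "(det2 p q)^2 \<le> ((p$1)^2 + (p$2)^2) * ((q$1)^2 + (q$2)^2)"
    using e zero_le_power2[of "p$1 * q$1 + p$2 * q$2"] by linarith
  then have "sqrt ((det2 p q)^2) \<le> sqrt (((p$1)^2 + (p$2)^2) * ((q$1)^2 + (q$2)^2))"
    by (rule real_sqrt_le_mono)
  then show ?thesis by (simp add: norm2 real_sqrt_mult)
qed

lemma decomp2:
  assumes "det2 p q \<noteq> 0"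
  shows "z = (det2 z q / det2 p q) *\<^sub>R p + (det2 p z / det2 p q) *\<^sub>R q"
proof -
  have h: "det2 z q * p$i + det2 p z * q$i = det2 p q * z$i" for i
    using exhaust_2[of i] by (auto simp: det2_def algebra_simps)
  show ?thesis unfolding vec2_eq using assms h[of 1] h[of 2] by (simp add: field_simps)
qed

definition mnorm_dummy :: bool where "mnorm_dummy = True"

lemma mnorm_ineq: "norm (A *v z) \<le> mnorm A * norm z"
  unfolding mnorm_def by (rule onorm) simp

lemma mnorm_nonneg: "mnorm A \<ge> 0"
  unfolding mnorm_def by (rule onorm_pos_le) simp

lemma mnorm_le: "(\<And>z. norm (A *v z) \<le> b * norm z) \<Longrightarrow> mnorm A \<le> b"
  unfolding mnorm_def by (rule onorm_le)

lemma mnorm_mult: "mnorm (A ** B) \<le> mnorm A * mnorm B"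
proof -
  have "onorm ((\<lambda>v. A *v v) \<circ> (\<lambda>v. B *v v)) \<le> onorm (\<lambda>v. A *v v) * onorm (\<lambda>v. B *v v)"
    by (rule onorm_compose) simp_all
  moreover have "((\<lambda>v. A *v v) \<circ> (\<lambda>v. B *v v)) = (\<lambda>v. (A ** B) *v v)"
    by (auto simp: matrix_vector_mul_assoc)
  ultimately show ?thesis by (simp add: mnorm_def)
qed

definition ent :: "real^2^2 \<Rightarrow> real" where
  "ent A = \<bar>A$1$1\<bar> + \<bar>A$1$2\<bar> + \<bar>A$2$1\<bar> + \<bar>A$2$2\<bar>"

lemma mnorm_le_ent: "mnorm A \<le> ent A"
proof (rule mnorm_le)
  fix z :: "real^2"
  have "norm (A *v z) \<le> \<bar>(A *v z)$1\<bar> + \<bar>(A *v z)$2\<bar>" by (rule norm2_le)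
  also have "\<dots> \<le> (\<bar>A$1$1\<bar> * \<bar>z$1\<bar> + \<bar>A$1$2\<bar> * \<bar>z$2\<bar>) + (\<bar>A$2$1\<bar> * \<bar>z$1\<bar> + \<bar>A$2$2\<bar> * \<bar>z$2\<bar>)"
    unfolding mvmul2 by (intro add_mono) (simp_all add: abs_mult[symmetric] abs_triangle_ineq)
  also have "\<dots> \<le> (\<bar>A$1$1\<bar> * norm z + \<bar>A$1$2\<bar> * norm z) + (\<bar>A$2$1\<bar> * norm z + \<bar>A$2$2\<bar> * norm z)"
    by (intro add_mono mult_left_mono component_le_norm_cart) auto
  also have "\<dots> = ent A * norm z" by (simp add: ent_def algebra_simps)
  finally show "norm (A *v z) \<le> ent A * norm z" .
qed

lemma entry_le_mnorm: "\<bar>A$i$j\<bar> \<le> mnorm A"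
proof -
  have "(A *v axis j 1) $ i = A$i$j"
    using exhaust_2[of i] exhaust_2[of j] by (auto simp: mvmul2 axis_def)
  then have "\<bar>A$i$j\<bar> \<le> norm (A *v axis j 1)" by (metis component_le_norm_cart)
  also have "\<dots> \<le> mnorm A * norm (axis j (1::real))" by (rule mnorm_ineq)
  finally show ?thesis by simp
qed

lemma ent_le_mnorm: "ent A \<le> 4 * mnorm A"
  using entry_le_mnorm[of A 1 1] entry_le_mnorm[of A 1 2] entry_le_mnorm[of A 2 1] entry_le_mnorm[of A 2 2]
  by (simp add: ent_def)

definition inv2 :: "real^2^2 \<Rightarrow> real^2^2" where
  "inv2 A = (\<chi> i j. (if i = 1 then (if j = 1 then A$2$2 else - A$1$2)
                      else (if j = 1 then - A$2$1 else A$1$1)) / det A)"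

lemma inv2_entries: "inv2 A $1$1 = A$2$2 / det A" "inv2 A $1$2 = - A$1$2 / det A"
  "inv2 A $2$1 = - A$2$1 / det A" "inv2 A $2$2 = A$1$1 / det A"
  by (simp_all add: inv2_def)

lemma inv2_aux:
  fixes d a11 a12 a21 a22 :: real
  assumes "d \<noteq> 0" "a11*a22 - a12*a21 = d"
  shows "a11 * (a22/d) + a12 * (-a21/d) = 1" "a11 * (-a12/d) + a12 * (a11/d) = 0"
    "a21 * (a22/d) + a22 * (-a21/d) = 0" "a21 * (-a12/d) + a22 * (a11/d) = 1"
    "(a22/d) * a11 + (-a12/d) * a21 = 1" "(a22/d) * a12 + (-a12/d) * a22 = 0"
    "(-a21/d) * a11 + (a11/d) * a21 = 0" "(-a21/d) * a12 + (a11/d) * a22 = 1"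
  using assms by (simp_all add: field_simps; linarith)+

lemma inv2_prop: fixes A :: "real^2^2" assumes "det A \<noteq> 0" shows "A ** inv2 A = mat 1" "inv2 A ** A = mat 1"
proof -
  have dd: "A$1$1 * A$2$2 - A$1$2 * A$2$1 = det A" by (simp add: det_2)
  note X = inv2_aux[OF assms dd]
  show "A ** inv2 A = mat 1" "inv2 A ** A = mat 1"
    unfolding mat2_eq mmul2 inv2_entries using X by simp_all
qed

lemma matrix_inv2: fixes A :: "real^2^2" assumes "det A \<noteq> 0" shows "matrix_inv A = inv2 A"
proof -
  have r: "A ** inv2 A = mat 1" and l: "inv2 A ** A = mat 1"
    using inv2_prop[OF assms] by simp_all
  then have ex: "\<exists>A'. A ** A' = mat 1 \<and> A' ** A = mat 1" by blast
  have "A ** matrix_inv A = mat 1 \<and> matrix_inv A ** A = mat 1"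
    unfolding matrix_inv_def by (rule someI_ex[OF ex])
  then have "matrix_inv A = (inv2 A ** A) ** matrix_inv A" using l by simp
  also have "\<dots> = inv2 A" using \<open>A ** matrix_inv A = mat 1 \<and> _\<close> by (simp add: matrix_mul_assoc[symmetric])
  finally show ?thesis .
qed

lemma matrix_inv_prop: fixes A :: "real^2^2" assumes "det A \<noteq> 0" shows "A ** matrix_inv A = mat 1" "matrix_inv A ** A = mat 1"
  using inv2_prop[OF assms] matrix_inv2[OF assms] by simp_all

lemma ent_inv: assumes "det A > 0" shows "ent (matrix_inv A) = ent A / det A"
  using assms by (simp add: matrix_inv2 ent_def inv2_entries abs_div abs_minus add_divide_distrib)

lemma mnorm_pos: assumes "det A \<noteq> 0" shows "mnorm A > 0"
proof -
  have "\<exists>i j. A$i$j \<noteq> 0"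
  proof (rule ccontr)
    assume "\<not> ?thesis"
    then have "det A = 0" by (simp add: det_2)
    then show False using assms by simp
  qed
  then obtain i j where "A$i$j \<noteq> 0" by blast
  then show ?thesis using entry_le_mnorm[of A i j] by simp
qed

lemma ln_inv_mnorm:
  assumes "det A > 0"
  shows "\<bar>ln (inverse (mnorm (matrix_inv A))) - (ln (det A) - ln (mnorm A))\<bar> \<le> ln 4"
proof -
  have dA: "det (matrix_inv A) \<noteq> 0"
  proof
    assume "det (matrix_inv A) = 0"
    then have "det (A ** matrix_inv A) = 0" by (simp add: det_mul)
    then show False using matrix_inv_prop(1)[of A] assms by simp
  qed
  let ?m = "mnorm A" and ?mi = "mnorm (matrix_inv A)" and ?d = "det A"
  have m: "?m > 0" using mnorm_pos assms by simp
  have mi: "?mi > 0" using mnorm_pos[OF dA] .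
  have e: "ent (matrix_inv A) = ent A / ?d" by (rule ent_inv[OF assms])
  have a1: "?mi \<le> 4 * ?m / ?d"
  proof -
    have "ent A / ?d \<le> 4 * ?m / ?d" using ent_le_mnorm[of A] assms by (intro divide_right_mono) auto
    then show ?thesis using mnorm_le_ent[of "matrix_inv A"] e by linarith
  qed
  have a2: "?m / ?d \<le> 4 * ?mi"
  proof -
    have "?m / ?d \<le> ent A / ?d" using mnorm_le_ent[of A] assms by (intro divide_right_mono) auto
    then show ?thesis using ent_le_mnorm[of "matrix_inv A"] e by linarith
  qed
  have "ln (inverse ?mi) = - ln ?mi" using mi by (simp add: ln_inverse)
  moreover have "ln ?mi \<le> ln 4 + ln ?m - ln ?d"
  proof -
    have "ln ?mi \<le> ln (4 * ?m / ?d)" using a1 mi m assms by (subst ln_le_cancel_iff) auto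
    also have "\<dots> = ln 4 + ln ?m - ln ?d" using m assms by (simp add: ln_div ln_mult)
    finally show ?thesis .
  qed
  moreover have "ln ?m - ln ?d \<le> ln 4 + ln ?mi"
  proof -
    have "ln (?m / ?d) \<le> ln (4 * ?mi)" using a2 m mi assms by (subst ln_le_cancel_iff) auto
    then show ?thesis using m mi assms by (simp add: ln_div ln_mult)
  qed
  ultimately show ?thesis unfolding abs_le_iff by linarith
qed


lemma span1: "w \<in> span {w}" by (simp add: span_base)

lemma span1_iff: "z \<in> span {w} \<longleftrightarrow> (\<exists>k. z = k *\<^sub>R w)"
  by (auto simp: span_singleton)

lemma restr_norm_line:
  assumes "w \<noteq> 0"
  shows "restr_norm A (span {w}) = norm (A *v w) / norm w"
proof -
  have "{norm (A *v v) | v. v \<in> span {w} \<and> norm v = 1} = {norm (A *v w) / norm w}"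
  proof (intro set_eqI iffI)
    fix r assume "r \<in> {norm (A *v v) | v. v \<in> span {w} \<and> norm v = 1}"
    then obtain k where k: "r = norm (A *v (k *\<^sub>R w))" "norm (k *\<^sub>R w) = 1"
      by (auto simp: span1_iff)
    then have "\<bar>k\<bar> = 1 / norm w" using assms by (simp add: field_simps)
    then show "r \<in> {norm (A *v w) / norm w}" using k by (simp add: matrix_vector_mult_scaleR)
  next
    fix r assume "r \<in> {norm (A *v w) / norm w}"
    then have "r = norm (A *v ((1 / norm w) *\<^sub>R w)) \<and> (1 / norm w) *\<^sub>R w \<in> span {w} \<and> norm ((1 / norm w) *\<^sub>R w) = 1"
      using assms by (auto simp: matrix_vector_mult_scaleR span1_iff)
    then show "r \<in> {norm (A *v v) | v. v \<in> span {w} \<and> norm v = 1}" by blast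
  qed
  then show ?thesis by (simp add: restr_norm_def)
qed

lemma image_span_in:
  assumes "(\<lambda>z. A *v z) ` span {p} = span {q}"
  shows "\<exists>k. A *v p = k *\<^sub>R q"
proof -
  have "A *v p \<in> span {q}" using assms span1[of p] by blast
  then show ?thesis by (simp add: span1_iff)
qed

lemma cpt_bounded:
  fixes f :: "'a::metric_space \<Rightarrow> real"
  assumes "compact (UNIV::'a set)" "continuous_on UNIV f"
  shows "\<exists>b. \<forall>x. \<bar>f x\<bar> \<le> b"
proof -
  have "bounded (f ` UNIV)" by (rule compact_imp_bounded[OF compact_continuous_image[OF assms(2,1)]])
  then show ?thesis by (auto simp: bounded_iff)
qed

lemma cpt_min:
  fixes f :: "'a::metric_space \<Rightarrow> real"
  assumes "compact (UNIV::'a set)" "continuous_on UNIV f"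
  shows "\<exists>x0. \<forall>x. f x0 \<le> f x"
  using continuous_attains_inf[OF assms(1) _ assms(2)] by auto

definition NN :: "real^2^2 \<Rightarrow> real^2 \<Rightarrow> real" where
  "NN A z = norm (A *v z) / norm z"

lemma NN_mult:
  assumes "A' *v z = k *\<^sub>R z'" "z \<noteq> 0" "z' \<noteq> 0"
  shows "NN (A ** A') z = NN A z' * NN A' z"
proof -
  have "(A ** A') *v z = k *\<^sub>R (A *v z')"
    by (simp add: matrix_vector_mul_assoc[symmetric] assms(1) matrix_vector_mult_scaleR)
  then show ?thesis using assms by (simp add: NN_def)
qed

lemma NN_le: "NN A z \<le> mnorm A"
proof (cases "z = 0")
  case True then show ?thesis by (simp add: NN_def mnorm_nonneg)
next
  case False then show ?thesis using mnorm_ineq[of A z] by (simp add: NN_def field_simps)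
qed

lemma NN_nonneg: "NN A z \<ge> 0" by (simp add: NN_def)

lemma mnorm_id: "mnorm (mat 1) \<le> 1"
  by (rule mnorm_le) simp

lemma cocyc_split: "cocyc T B (n + m) x = cocyc T B m ((T^^n) x) ** cocyc T B n x"
proof (induction m)
  case 0 then show ?case by simp
next
  case (Suc m)
  have "(T ^^ (n + m)) x = (T ^^ m) ((T ^^ n) x)" by (subst add.commute) (simp add: funpow_add)
  then show ?case using Suc by (simp add: matrix_mul_assoc)
qed

lemma cocyc_Suc': "cocyc T B (Suc n) y = cocyc T B n (T y) ** B y"
  using cocyc_split[of T B 1 n y] by simp

lemma det_cocyc: "det (cocyc T B n x) = (\<Prod>k<n. det (B ((T^^k) x)))"
  by (induction n) (simp_all add: det_mul)

lemma matrix_inv_mult: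
  fixes X Y :: "real^2^2"
  assumes "det X \<noteq> 0" "det Y \<noteq> 0"
  shows "matrix_inv (X ** Y) = matrix_inv Y ** matrix_inv X"
proof -
  have dXY: "det (X ** Y) \<noteq> 0" using assms by (simp add: det_mul)
  let ?Z = "matrix_inv Y ** matrix_inv X"
  have "(X ** Y) ** ?Z = X ** ((Y ** matrix_inv Y) ** matrix_inv X)" by (simp add: matrix_mul_assoc)
  also have "\<dots> = mat 1" using matrix_inv_prop[OF assms(1)] matrix_inv_prop[OF assms(2)] by simp
  finally have Z: "(X ** Y) ** ?Z = mat 1" .
  have "matrix_inv (X ** Y) = matrix_inv (X ** Y) ** ((X ** Y) ** ?Z)"
    by (simp only: Z matrix_mul_rid)
  also have "\<dots> = (matrix_inv (X ** Y) ** (X ** Y)) ** ?Z"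
    by (simp only: matrix_mul_assoc)
  also have "\<dots> = ?Z" using matrix_inv_prop[OF dXY] by simp
  finally show ?thesis .
qed

lemma cocyc_inv_eq:
  assumes "bij T" and dpos: "\<And>x. det (B x) > 0"
  shows "cocyc_inv T B n x = matrix_inv (cocyc T B n ((inv T ^^ n) x))"
proof (induction n arbitrary: x)
  case 0
  have "matrix_inv (mat 1 :: real^2^2) = mat 1" using matrix_inv2[of "mat 1 :: real^2^2"]
    by (simp add: mat2_eq inv2_entries det_2)
  then show ?case by simp
next
  case (Suc n)
  let ?y = "(inv T ^^ Suc n) x"
  have Ty: "T ?y = (inv T ^^ n) x" using assms(1) by (simp add: bij_is_surj surj_f_inv_f)
  have dc: "det (cocyc T B n z) \<noteq> 0" for z
    using dpos by (simp add: det_cocyc) (metis less_irrefl prod_pos)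
  have "cocyc_inv T B (Suc n) x = matrix_inv (B ?y) ** matrix_inv (cocyc T B n (T ?y))"
    using Suc Ty by simp
  also have "\<dots> = matrix_inv (cocyc T B n (T ?y) ** B ?y)"
    using matrix_inv_mult[OF dc[of "T ?y"], of "B ?y"] dpos[of ?y] by simp
  also have "\<dots> = matrix_inv (cocyc T B (Suc n) ?y)" by (simp only: cocyc_Suc')
  finally show ?case .
qed

lemma inv_funpow_cancel:
  fixes T :: "'a \<Rightarrow> 'a"
  assumes "bij T"
  shows "(inv T ^^ n) ((T ^^ n) x) = x"
proof (induction n arbitrary: x)
  case 0 show ?case by (simp add: funpow_0)
next
  case (Suc n)
  have e1: "(inv T ^^ Suc n) y = (inv T ^^ n) (inv T y)" for y by (simp add: funpow_Suc_right del: funpow.simps)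
  have e2: "(T ^^ Suc n) x = T ((T ^^ n) x)" by simp
  have "(inv T ^^ Suc n) ((T ^^ Suc n) x) = (inv T ^^ n) (inv T (T ((T ^^ n) x)))"
    by (simp only: e1 e2)
  also have "\<dots> = x" using Suc assms by (simp add: bij_is_inj inv_f_f)
  finally show ?case .
qed

lemma funpow_inv_cancel:
  fixes T :: "'a \<Rightarrow> 'a"
  assumes "bij T" and "k \<le> n"
  shows "(T ^^ k) ((inv T ^^ n) x) = (inv T ^^ (n - k)) x"
  using assms(2)
proof (induction k arbitrary: n)
  case 0 then show ?case by simp
next
  case (Suc k)
  then obtain n' where n: "n = Suc n'" by (cases n) auto
  have e1: "(inv T ^^ n) x = inv T ((inv T ^^ n') x)" by (simp add: n)
  have e2: "(T ^^ Suc k) y = (T ^^ k) (T y)" for y by (simp add: funpow_Suc_right del: funpow.simps)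
  have "(T ^^ Suc k) ((inv T ^^ n) x) = (T ^^ k) (T (inv T ((inv T ^^ n') x)))"
    by (simp only: e1 e2)
  also have "\<dots> = (T ^^ k) ((inv T ^^ n') x)" using assms(1) by (simp add: bij_is_surj surj_f_inv_f)
  also have "\<dots> = (inv T ^^ (n' - k)) x" using Suc n by simp
  finally show ?case using n by simp
qed


locale dom = erg M T for M :: "'a::metric_space measure" and T +
  fixes B :: "'a \<Rightarrow> real^2^2" and w :: "'a \<Rightarrow> real" and E :: "'a \<Rightarrow> (real^2) set"
  assumes cpt: "compact (UNIV::'a set)"
    and bijT: "bij T" and invTcont: "continuous_on UNIV (inv T)"
    and sets_borel: "sets M = sets borel"
    and Bent: "\<And>i j. continuous_on UNIV (\<lambda>x. B x $ i $ j)"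
    and detpos: "\<And>x. det (B x) > 0"
    and wcont: "continuous_on UNIV w"
    and ds: "dominated_splitting T B E (\<lambda>x. span {vector [w x, 1]})"
    and gpos: "\<And>x. B x $ 2 $ 1 * w x + B x $ 2 $ 2 > 0"
begin

definition v :: "'a \<Rightarrow> real^2" where "v x = vector [w x, 1]"
definition g where "g x = B x $ 2 $ 1 * w x + B x $ 2 $ 2"
definition G where "G n x = (\<Prod>k<n. g ((T^^k) x))"

lemma v2[simp]: "v x $ 2 = 1" "v x $ 1 = w x" by (simp_all add: v_def)

lemma vnz: "v x \<noteq> 0"
proof
  assume "v x = 0" then have "v x $ 2 = 0" by simp
  then show False by simp
qed

lemma vge1: "norm (v x) \<ge> 1"
  using component_le_norm_cart[of "v x" 2] by simp

lemma Kv_ex: "\<exists>K. \<forall>x. norm (v x) \<le> K"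
proof -
  obtain b where b: "\<And>x. \<bar>w x\<bar> \<le> b" using cpt_bounded[OF cpt wcont] by blast
  have "norm (v x) \<le> b + 1" for x using norm2_le[of "v x"] b[of x] by simp
  then show ?thesis by blast
qed

definition Kv where "Kv = (SOME K. \<forall>x. norm (v x) \<le> K)"

lemma Kv: "norm (v x) \<le> Kv"
  using someI_ex[OF Kv_ex] unfolding Kv_def by blast

lemma Kv_ge1: "Kv \<ge> 1" using Kv[of undefined] vge1[of undefined] by linarith

lemma ds_E: "continuous_line_field E" using ds by (simp add: dominated_splitting_def)
lemma ds_EF: "E x \<inter> span {v x} = {0}" using ds by (simp add: dominated_splitting_def v_def)
lemma ds_imE: "(\<lambda>z. B x *v z) ` E x = E (T x)" using ds by (simp add: dominated_splitting_def)
lemma ds_imF: "(\<lambda>z. B x *v z) ` span {v x} = span {v (T x)}" using ds by (simp add: dominated_splitting_def v_def)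
lemma ds_dom: "\<exists>l::nat. l \<ge> 1 \<and> (\<forall>x. restr_norm (cocyc T B l x) (E x) *
         restr_norm (cocyc_inv T B l ((T ^^ l) x)) (span {v ((T ^^ l) x)}) < 1/2)"
  using ds by (simp add: dominated_splitting_def v_def)

lemma Bv: "B x *v v x = g x *\<^sub>R v (T x)"
proof -
  obtain k where k: "B x *v v x = k *\<^sub>R v (T x)" using image_span_in[OF ds_imF] by blast
  have "(B x *v v x) $ 2 = g x" by (simp add: mvmul2 g_def)
  moreover have "(k *\<^sub>R v (T x)) $ 2 = k" by simp
  ultimately show ?thesis using k by simp
qed

lemma G_Suc: "G (Suc n) x = G n x * g ((T^^n) x)" by (simp add: G_def)

lemma gpos': "g x > 0" using gpos by (simp add: g_def)

lemma Gpos: "G n x > 0" unfolding G_def using gpos' by (simp add: prod_pos)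

lemma cocyc_v: "cocyc T B n x *v v x = G n x *\<^sub>R v ((T^^n) x)"
proof (induction n)
  case 0 then show ?case by (simp add: G_def)
next
  case (Suc n)
  have "cocyc T B (Suc n) x *v v x = B ((T^^n) x) *v (cocyc T B n x *v v x)"
    by (simp add: matrix_vector_mul_assoc)
  also have "\<dots> = G n x *\<^sub>R (B ((T^^n) x) *v v ((T^^n) x))"
    by (simp add: Suc matrix_vector_mult_scaleR)
  also have "\<dots> = G (Suc n) x *\<^sub>R v ((T^^Suc n) x)" by (simp add: Bv G_Suc)
  finally show ?case .
qed

lemma e_ex: "\<exists>z. z \<noteq> 0 \<and> E x = span {z}"
  using ds_E unfolding continuous_line_field_def by blast

definition e where "e x = (SOME z. z \<noteq> 0 \<and> E x = span {z})"

lemma e: "e x \<noteq> 0" "E x = span {e x}"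
  using someI_ex[OF e_ex[of x]] unfolding e_def by blast+

lemma Be: "\<exists>k. B x *v e x = k *\<^sub>R e (T x)"
  using image_span_in[of "B x" "e x" "e (T x)"] ds_imE[of x] e by simp

lemma cocyc_e: "\<exists>k. cocyc T B n x *v e x = k *\<^sub>R e ((T^^n) x)"
proof (induction n)
  case 0 then show ?case by (intro exI[of _ 1]) simp
next
  case (Suc n)
  then obtain k where k: "cocyc T B n x *v e x = k *\<^sub>R e ((T^^n) x)" by blast
  obtain k' where k': "B ((T^^n) x) *v e ((T^^n) x) = k' *\<^sub>R e (T ((T^^n) x))" using Be by blast
  have "cocyc T B (Suc n) x *v e x = B ((T^^n) x) *v (cocyc T B n x *v e x)"
    by (simp add: matrix_vector_mul_assoc)
  also have "\<dots> = (k * k') *\<^sub>R e ((T^^Suc n) x)"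
    by (simp add: k matrix_vector_mult_scaleR k')
  finally show ?case by blast
qed

definition rho where "rho n x = NN (cocyc T B n x) (e x)"
definition phi where "phi n x = NN (cocyc T B n x) (v x)"

lemma phi_eq: "phi n x = G n x * norm (v ((T^^n) x)) / norm (v x)"
  using Gpos[of n x] by (simp add: phi_def NN_def cocyc_v)

lemma funpow_add': "(T ^^ (n + m)) x = (T ^^ m) ((T ^^ n) x)"
  by (subst add.commute) (simp add: funpow_add)

lemma rho_mult: "rho (n + m) x = rho m ((T^^n) x) * rho n x"
proof -
  obtain k where k: "cocyc T B n x *v e x = k *\<^sub>R e ((T^^n) x)" using cocyc_e by blast
  show ?thesis unfolding rho_def cocyc_split by (rule NN_mult[OF k e(1) e(1)])
qed

lemma phi_mult: "phi (n + m) x = phi m ((T^^n) x) * phi n x"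
  unfolding phi_def cocyc_split by (rule NN_mult[OF cocyc_v vnz vnz])

lemma rho_nonneg: "rho n x \<ge> 0" by (simp add: rho_def NN_nonneg)
lemma phi_pos: "phi n x > 0" using Gpos[of n x] vnz by (simp add: phi_eq)

lemma phi_ge: "phi n x \<ge> G n x / Kv"
proof -
  have "G n x / Kv \<le> G n x * norm (v ((T^^n) x)) / Kv"
    using Gpos[of n x] vge1 Kv_ge1 by (intro divide_right_mono) auto
  also have "\<dots> \<le> G n x * norm (v ((T^^n) x)) / norm (v x)"
  proof -
    have "0 < Kv * norm (v x)" using Kv_ge1 vge1[of x] by (intro mult_pos_pos) auto
    then show ?thesis using Gpos[of n x] vge1[of x] Kv[of x] vge1[of "(T^^n) x"]
      by (intro divide_left_mono) auto
  qed
  finally show ?thesis by (simp add: phi_eq)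
qed

lemma phi_le: "phi n x \<le> G n x * Kv"
proof -
  have "G n x * norm (v ((T^^n) x)) / norm (v x) \<le> G n x * norm (v ((T^^n) x)) / 1"
    using Gpos[of n x] vge1[of x] vge1[of "(T^^n) x"] by (intro divide_left_mono) auto
  also have "\<dots> = G n x * norm (v ((T^^n) x))" by simp
  also have "\<dots> \<le> G n x * Kv" using Gpos[of n x] Kv by (intro mult_left_mono) auto
  finally show ?thesis by (simp add: phi_eq)
qed

lemma det_cocyc_pos: "det (cocyc T B n x) > 0"
  by (simp add: det_cocyc prod_pos detpos)

lemma dom_l: "\<exists>l::nat. l \<ge> 1 \<and> (\<forall>x. rho l x \<le> phi l x)"
proof -
  obtain l :: nat where l: "l \<ge> 1" and H: "\<And>x. restr_norm (cocyc T B l x) (E x) *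
         restr_norm (cocyc_inv T B l ((T ^^ l) x)) (span {v ((T ^^ l) x)}) < 1/2"
    using ds_dom by blast
  have "rho l x \<le> phi l x" for x
  proof -
    let ?A = "cocyc T B l x"
    have dA: "det ?A \<noteq> 0" using det_cocyc_pos[of l x] by simp
    have r1: "restr_norm ?A (E x) = rho l x"
      using e[of x] by (simp add: restr_norm_line rho_def NN_def)
    have ci: "cocyc_inv T B l ((T ^^ l) x) = matrix_inv ?A"
      by (simp add: cocyc_inv_eq[OF bijT detpos] inv_funpow_cancel[OF bijT])
    have "v x = (matrix_inv ?A ** ?A) *v v x" using matrix_inv_prop(2)[OF dA] by simp
    also have "\<dots> = G l x *\<^sub>R (matrix_inv ?A *v v ((T^^l) x))"
      by (simp add: matrix_vector_mul_assoc[symmetric] cocyc_v matrix_vector_mult_scaleR)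
    finally have iv: "matrix_inv ?A *v v ((T^^l) x) = (1 / G l x) *\<^sub>R v x"
      using Gpos[of l x] by (simp add: field_simps)
    have r2: "restr_norm (cocyc_inv T B l ((T ^^ l) x)) (span {v ((T ^^ l) x)}) = 1 / phi l x"
      using Gpos[of l x] vnz[of x] vnz[of "(T^^l) x"]
      by (simp add: ci restr_norm_line iv phi_eq)
    have "rho l x * (1 / phi l x) < 1/2" using H[of x] r1 r2 by simp
    then have "rho l x < phi l x / 2" using phi_pos[of l x] by (simp add: field_simps)
    then show ?thesis using phi_pos[of l x] by simp
  qed
  then show ?thesis using l by blast
qed


end

context dom begin
lemma g_cont: "continuous_on UNIV g"
  unfolding g_def[abs_def] by (intro continuous_intros Bent wcont)

lemma bB_ex: "\<exists>b. b \<ge> 0 \<and> (\<forall>x. mnorm (B x) \<le> b)"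
proof -
  obtain b11 where b11: "\<And>x. \<bar>B x $1$1\<bar> \<le> b11" using cpt_bounded[OF cpt Bent] by blast
  obtain b12 where b12: "\<And>x. \<bar>B x $1$2\<bar> \<le> b12" using cpt_bounded[OF cpt Bent] by blast
  obtain b21 where b21: "\<And>x. \<bar>B x $2$1\<bar> \<le> b21" using cpt_bounded[OF cpt Bent] by blast
  obtain b22 where b22: "\<And>x. \<bar>B x $2$2\<bar> \<le> b22" using cpt_bounded[OF cpt Bent] by blast
  have "mnorm (B x) \<le> b11 + b12 + b21 + b22" for x
    using mnorm_le_ent[of "B x"] b11[of x] b12[of x] b21[of x] b22[of x] by (simp add: ent_def)
  moreover have "0 \<le> b11 + b12 + b21 + b22"
    using b11[of undefined] b12[of undefined] b21[of undefined] b22[of undefined] by linarith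
  ultimately show ?thesis by blast
qed

definition bB where "bB = (SOME b. b \<ge> 0 \<and> (\<forall>x. mnorm (B x) \<le> b))"
lemma bB: "bB \<ge> 0" "mnorm (B x) \<le> bB"
  using someI_ex[OF bB_ex] unfolding bB_def by blast+

lemma gm_ex: "\<exists>m>0. \<forall>x. g x \<ge> m"
  using cpt_min[OF cpt g_cont] gpos' by blast

definition gm where "gm = (SOME m. m > 0 \<and> (\<forall>x. g x \<ge> m))"
lemma gm: "gm > 0" "g x \<ge> gm"
  using someI_ex[OF gm_ex] unfolding gm_def by blast+

lemma mnorm_cocyc: "mnorm (cocyc T B n x) \<le> bB ^ n"
proof (induction n)
  case 0 then show ?case using mnorm_id by simp
next
  case (Suc n)
  have "mnorm (cocyc T B (Suc n) x) \<le> mnorm (B ((T^^n) x)) * mnorm (cocyc T B n x)"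
    by (simp add: mnorm_mult)
  also have "\<dots> \<le> bB * bB ^ n" using Suc bB by (intro mult_mono) (auto simp: mnorm_nonneg)
  finally show ?case by simp
qed

lemma G_ge: "G n x \<ge> gm ^ n"
proof (induction n)
  case 0 then show ?case by (simp add: G_def)
next
  case (Suc n)
  have "gm ^ n * gm \<le> G n x * g ((T^^n) x)" using Suc gm by (intro mult_mono) (auto simp: less_imp_le Gpos)
  then show ?case by (simp add: G_Suc mult.commute)
qed

definition lD where "lD = (SOME l::nat. l \<ge> 1 \<and> (\<forall>x. rho l x \<le> phi l x))"
lemma lD: "lD \<ge> 1" "rho lD x \<le> phi lD x"
  using someI_ex[OF dom_l] unfolding lD_def by blast+

definition qq where "qq = max 1 (bB / gm)"
definition R0 where "R0 = Kv * qq ^ lD"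

lemma R0_ge1: "R0 \<ge> 1"
proof -
  have "1 \<le> qq ^ lD" unfolding qq_def by (rule one_le_power) simp
  then show ?thesis unfolding R0_def using mult_mono[of 1 Kv 1 "qq ^ lD"] Kv_ge1 by simp
qed

lemma rho_base: assumes "n < lD" shows "rho n x \<le> R0 * phi n x"
proof -
  have "rho n x \<le> bB ^ n" using NN_le mnorm_cocyc order_trans unfolding rho_def by blast
  also have "\<dots> = (bB / gm) ^ n * gm ^ n" using gm by (simp add: power_divide)
  also have "\<dots> \<le> qq ^ lD * G n x"
  proof (rule mult_mono)
    have "(bB / gm) ^ n \<le> qq ^ n" unfolding qq_def using bB gm by (intro power_mono) auto
    also have "\<dots> \<le> qq ^ lD" unfolding qq_def using assms by (intro power_increasing) auto
    finally show "(bB / gm) ^ n \<le> qq ^ lD" .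
    show "gm ^ n \<le> G n x" by (rule G_ge)
  qed (use gm(1) in \<open>auto simp: qq_def\<close>)
  also have "\<dots> \<le> qq ^ lD * (Kv * phi n x)"
  proof -
    have "G n x \<le> Kv * phi n x" using phi_ge[of n x] Kv_ge1 by (simp add: field_simps)
    then show ?thesis by (intro mult_left_mono) (auto simp: qq_def)
  qed
  finally show ?thesis by (simp add: R0_def algebra_simps)
qed

lemma rho_phi: "rho n x \<le> R0 * phi n x"
proof (induction n arbitrary: x rule: less_induct)
  case (less n)
  show ?case
  proof (cases "n < lD")
    case True then show ?thesis by (rule rho_base)
  next
    case False
    then have n: "n = lD + (n - lD)" by simp
    have lt: "n - lD < n" using lD(1) False by simp
    have "rho n x = rho (n - lD) ((T^^lD) x) * rho lD x" by (subst n) (rule rho_mult)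
    also have "\<dots> \<le> (R0 * phi (n - lD) ((T^^lD) x)) * phi lD x"
    proof (rule mult_mono)
      show "0 \<le> R0 * phi (n - lD) ((T ^^ lD) x)" using R0_ge1 phi_pos[of "n - lD" "(T ^^ lD) x"] by simp
    qed (use less.IH[OF lt] lD(2) rho_nonneg in auto)
    also have "\<dots> = R0 * phi n x" by (subst (2) n, subst phi_mult) simp
    finally show ?thesis .
  qed
qed

definition dl where "dl x = \<bar>det2 (e x) (v x)\<bar> / (norm (e x) * norm (v x))"

lemma det2_ev: "det2 (e x) (v x) \<noteq> 0"
proof
  assume H: "det2 (e x) (v x) = 0"
  have "e x = (e x $ 2) *\<^sub>R v x"
    using H unfolding vec2_eq det2_def by simp
  then have "e x \<in> span {v x}" by (auto simp: span1_iff)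
  moreover have "e x \<in> E x" using e(2) span1 by simp
  ultimately have "e x \<in> E x \<inter> span {v x}" by blast
  then show False using ds_EF e(1) by simp
qed

lemma dl_pos: "dl x > 0"
  using det2_ev[of x] e(1)[of x] vnz[of x] by (simp add: dl_def)

lemma dl_cont: "continuous_on UNIV dl"
proof -
  have "isCont dl x" for x
  proof -
    obtain U u where U: "open U" "x \<in> U" "continuous_on U u" "\<forall>y\<in>U. u y \<noteq> 0 \<and> E y = span {u y}"
      using ds_E unfolding continuous_line_field_def by blast
    have eq: "dl y = \<bar>(u y)$1 - (u y)$2 * w y\<bar> / (norm (u y) * sqrt ((w y)^2 + 1))" if "y \<in> U" for y
    proof -
      have Ey: "E y = span {u y}" using U(4) that by blast
      have "e y \<in> E y" by (subst e(2)) (rule span1)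
      then have "e y \<in> span {u y}" by (metis Ey)
      then obtain k where k: "e y = k *\<^sub>R u y" by (auto simp: span1_iff)
      have "k \<noteq> 0" using e(1)[of y] k by auto
      have "norm (v y) = sqrt ((w y)^2 + 1)" by (simp add: norm2)
      moreover have "det2 (e y) (v y) = k * ((u y)$1 - (u y)$2 * w y)" by (simp add: k det2_def algebra_simps)
      moreover have "norm (e y) = \<bar>k\<bar> * norm (u y)" by (simp add: k)
      ultimately have "dl y = (\<bar>k\<bar> * \<bar>(u y)$1 - (u y)$2 * w y\<bar>) / (\<bar>k\<bar> * (norm (u y) * sqrt ((w y)^2 + 1)))"
        unfolding dl_def by (simp only: abs_mult mult.assoc)
      also have "\<dots> = \<bar>(u y)$1 - (u y)$2 * w y\<bar> / (norm (u y) * sqrt ((w y)^2 + 1))"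
        using \<open>k \<noteq> 0\<close> by simp
      finally show ?thesis .
    qed
    have pos: "norm (u y) * sqrt ((w y)^2 + 1) \<noteq> 0" if "y \<in> U" for y
    proof -
      have "sqrt ((w y)^2 + 1) > 0" by (simp add: add_nonneg_pos)
      then show ?thesis using U(4) that by simp
    qed
    have c1: "continuous_on U (\<lambda>y. u y $ 1)" by (rule continuous_on_component[OF U(3)])
    have c2: "continuous_on U (\<lambda>y. u y $ 2)" by (rule continuous_on_component[OF U(3)])
    have wU: "continuous_on U w" by (rule continuous_on_subset[OF wcont]) simp
    have cn: "continuous_on U (\<lambda>y. norm (u y))" by (rule continuous_on_norm[OF U(3)])
    have cs: "continuous_on U (\<lambda>y. sqrt ((w y)^2 + 1))"
      by (intro continuous_on_real_sqrt continuous_on_add continuous_on_power wU continuous_on_const)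
    have cnum: "continuous_on U (\<lambda>y. \<bar>(u y)$1 - (u y)$2 * w y\<bar>)"
      by (intro continuous_on_rabs continuous_on_diff continuous_on_mult c1 c2 wU)
    have cden: "continuous_on U (\<lambda>y. norm (u y) * sqrt ((w y)^2 + 1))"
      by (intro continuous_on_mult cn cs)
    have c: "continuous_on U (\<lambda>y. \<bar>(u y)$1 - (u y)$2 * w y\<bar> / (norm (u y) * sqrt ((w y)^2 + 1)))"
      by (rule continuous_on_divide[OF cnum cden]) (use pos in blast)
    have "continuous_on U dl = continuous_on U (\<lambda>y. \<bar>(u y)$1 - (u y)$2 * w y\<bar> / (norm (u y) * sqrt ((w y)^2 + 1)))"
      by (rule continuous_on_cong[OF refl eq])
    then have "continuous_on U dl" using c by simp
    then show "isCont dl x" using U(1,2) by (simp add: continuous_on_eq_continuous_at)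
  qed
  then show ?thesis by (simp add: continuous_at_imp_continuous_on)
qed

definition dmin where "dmin = (SOME m. m > 0 \<and> (\<forall>x. dl x \<ge> m))"
lemma dmin: "dmin > 0" "dl x \<ge> dmin"
proof -
  have ex: "\<exists>m. m > 0 \<and> (\<forall>x. dl x \<ge> m)" using cpt_min[OF cpt dl_cont] dl_pos by blast
  have "dmin > 0 \<and> (\<forall>x. dl x \<ge> dmin)" unfolding dmin_def by (rule someI_ex[OF ex])
  then show "dmin > 0" "dl x \<ge> dmin" by blast+
qed


lemma upper: "mnorm (cocyc T B n x) \<le> (R0 + 1) / dmin * phi n x"
proof (rule mnorm_le)
  fix z :: "real^2"
  define A where "A = cocyc T B n x"
  define p where "p = e x"
  define q where "q = v x"
  define D where "D = det2 p q"
  have D0: "D \<noteq> 0" using det2_ev by (simp add: D_def p_def q_def)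
  have np: "norm p > 0" using e(1) by (simp add: p_def)
  have nq: "norm q > 0" using vnz by (simp add: q_def)
  define a where "a = det2 z q / D"
  define b where "b = det2 p z / D"
  have z: "z = a *\<^sub>R p + b *\<^sub>R q" unfolding a_def b_def D_def
    by (rule decomp2) (use D0 in \<open>simp add: D_def\<close>)
  have "A *v z = a *\<^sub>R (A *v p) + b *\<^sub>R (A *v q)"
    by (subst z) (simp add: matrix_vector_right_distrib matrix_vector_mult_scaleR)
  then have n1: "norm (A *v z) \<le> \<bar>a\<bar> * norm (A *v p) + \<bar>b\<bar> * norm (A *v q)"
    by (metis norm_scaleR norm_triangle_ineq)
  have rh: "rho n x = norm (A *v p) / norm p" by (simp add: rho_def NN_def A_def p_def)
  have ph: "phi n x = norm (A *v q) / norm q" by (simp add: phi_def NN_def A_def q_def)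
  have dlx: "dl x = \<bar>D\<bar> / (norm p * norm q)" by (simp add: dl_def D_def p_def q_def)
  have h1: "\<bar>a\<bar> * norm (A *v p) \<le> norm z * norm q * norm (A *v p) / \<bar>D\<bar>"
  proof -
    have "\<bar>a\<bar> * norm (A *v p) = \<bar>det2 z q\<bar> * norm (A *v p) / \<bar>D\<bar>" by (simp add: a_def abs_divide)
    also have "\<dots> \<le> (norm z * norm q) * norm (A *v p) / \<bar>D\<bar>"
      by (intro divide_right_mono mult_right_mono det2_bound) auto
    finally show ?thesis by simp
  qed
  have h2: "\<bar>b\<bar> * norm (A *v q) \<le> norm p * norm z * norm (A *v q) / \<bar>D\<bar>"
  proof -
    have "\<bar>b\<bar> * norm (A *v q) = \<bar>det2 p z\<bar> * norm (A *v q) / \<bar>D\<bar>" by (simp add: b_def abs_divide)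
    also have "\<dots> \<le> (norm p * norm z) * norm (A *v q) / \<bar>D\<bar>"
      by (intro divide_right_mono mult_right_mono det2_bound) auto
    finally show ?thesis by simp
  qed
  have eq1: "norm z * norm q * norm (A *v p) / \<bar>D\<bar> = norm z * rho n x / dl x"
    using np nq D0 by (simp add: rh dlx field_simps)
  have eq2: "norm p * norm z * norm (A *v q) / \<bar>D\<bar> = norm z * phi n x / dl x"
    using np nq D0 by (simp add: ph dlx field_simps)
  have eq3: "norm z * rho n x / dl x + norm z * phi n x / dl x = norm z * ((rho n x + phi n x) / dl x)"
    by (simp add: add_divide_distrib distrib_left)
  have m: "(rho n x + phi n x) / dl x \<le> (R0 + 1) / dmin * phi n x"
  proof -
    have "(rho n x + phi n x) / dl x \<le> (R0 * phi n x + phi n x) / dl x"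
      using rho_phi[of n x] dl_pos[of x] by (intro divide_right_mono) auto
    also have "\<dots> \<le> (R0 * phi n x + phi n x) / dmin"
    proof -
      have p1: "0 \<le> R0 * phi n x + phi n x" using R0_ge1 phi_pos[of n x]
        by (intro add_nonneg_nonneg mult_nonneg_nonneg) auto
      have p2: "0 < dl x * dmin" using dl_pos[of x] dmin(1) by simp
      show ?thesis by (rule divide_left_mono[OF dmin(2) p1 p2])
    qed
    also have "\<dots> = (R0 + 1) / dmin * phi n x" by (simp add: field_simps)
    finally show ?thesis .
  qed
  have "norm (A *v z) \<le> norm z * ((rho n x + phi n x) / dl x)"
    using n1 h1 h2 eq1 eq2 eq3 by linarith
  also have "\<dots> \<le> norm z * ((R0 + 1) / dmin * phi n x)" by (rule mult_left_mono[OF m]) simp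
  finally show "norm (cocyc T B n x *v z) \<le> (R0 + 1) / dmin * phi n x * norm z"
    by (simp add: A_def mult.commute)
qed

definition C1 where "C1 = (R0 + 1) / dmin"
lemma C1_pos: "C1 > 0" using R0_ge1 dmin by (simp add: C1_def)

definition Cl where "Cl = \<bar>ln (C1 * Kv)\<bar> + \<bar>ln Kv\<bar>"

lemma logb: "\<bar>ln (mnorm (cocyc T B n x)) - ln (G n x)\<bar> \<le> Cl"
proof -
  let ?m = "mnorm (cocyc T B n x)" and ?G = "G n x"
  have G0: "?G > 0" by (rule Gpos)
  have K0: "Kv > 0" using Kv_ge1 by simp
  have lo: "?G / Kv \<le> ?m" using phi_ge[of n x] NN_le[of "cocyc T B n x" "v x"] by (simp add: phi_def)
  have hi: "?m \<le> C1 * Kv * ?G"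
  proof -
    have "?m \<le> C1 * phi n x" using upper by (simp add: C1_def)
    also have "\<dots> \<le> C1 * (?G * Kv)" using C1_pos phi_le by (intro mult_left_mono) auto
    finally show ?thesis by (simp add: algebra_simps)
  qed
  have "?G / Kv > 0" using G0 K0 by simp
  then have m0: "?m > 0" using lo by linarith
  have "ln (?G / Kv) \<le> ln ?m" using lo G0 K0 m0 by (subst ln_le_cancel_iff) auto
  then have l1: "ln ?G - ln Kv \<le> ln ?m" using G0 K0 by (simp add: ln_div)
  have "ln ?m \<le> ln (C1 * Kv * ?G)" using hi m0 G0 K0 C1_pos by (subst ln_le_cancel_iff) auto
  then have l2: "ln ?m \<le> ln (C1 * Kv) + ln ?G" using G0 K0 C1_pos by (simp add: ln_mult)
  show ?thesis unfolding Cl_def abs_le_iff using l1 l2 by linarith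
qed

lemma S_lng: "S (\<lambda>x. ln (g x)) n x = ln (G n x)"
proof -
  have "g y \<noteq> 0" for y using gpos'[of y] by simp
  then show ?thesis unfolding S_def G_def by (simp add: ln_prod)
qed

lemma cont_meas: "continuous_on UNIV (f :: 'a \<Rightarrow> real) \<Longrightarrow> f \<in> borel_measurable M"
  using borel_measurable_continuous_onI measurable_cong_sets[OF sets_borel refl] by blast

lemma lng_cont: "continuous_on UNIV (\<lambda>x. ln (g x))"
  using gpos' by (intro continuous_on_ln g_cont) (auto simp: less_imp_neq[symmetric])

lemma div_n_null: "(\<And>n. \<bar>d n\<bar> \<le> C) \<Longrightarrow> (\<lambda>n. d n / real n) \<longlonglongrightarrow> 0"
proof (rule Lim_null_comparison[where g="\<lambda>n. C / real n"])
  assume H: "\<And>n. \<bar>d n\<bar> \<le> C"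
  show "eventually (\<lambda>n. norm (d n / real n) \<le> C / real n) sequentially"
    using H by (intro always_eventually allI) (simp add: abs_divide divide_right_mono)
  show "(\<lambda>n. C / real n) \<longlonglongrightarrow> 0" by (rule lim_const_over_n)
qed

lemma lyap_plus_eq: "lyap_plus M T B = expectation (\<lambda>x. ln (g x))"
proof -
  let ?a = "expectation (\<lambda>x. ln (g x))"
  obtain bb where bb: "\<And>x. \<bar>ln (g x)\<bar> \<le> bb" using cpt_bounded[OF cpt lng_cont] by blast
  have AE1: "AE x in M. (\<lambda>n. S (\<lambda>x. ln (g x)) n x / real n) \<longlonglongrightarrow> ?a"
    by (rule birkhoff[OF cont_meas[OF lng_cont] bb])
  have AE2: "AE x in M. (\<lambda>n. ln (mnorm (cocyc T B n x)) / real n) \<longlonglongrightarrow> ?a"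
    using AE1
  proof eventually_elim
    case (elim x)
    have d: "(\<lambda>n. (ln (mnorm (cocyc T B n x)) - S (\<lambda>x. ln (g x)) n x) / real n) \<longlonglongrightarrow> 0"
      by (rule div_n_null[where C=Cl]) (simp add: S_lng logb)
    have "(\<lambda>n. S (\<lambda>x. ln (g x)) n x / real n + (ln (mnorm (cocyc T B n x)) - S (\<lambda>x. ln (g x)) n x) / real n) \<longlonglongrightarrow> ?a + 0"
      by (rule tendsto_add[OF elim d])
    then show ?case by (simp add: diff_divide_distrib)
  qed
  show ?thesis unfolding lyap_plus_def
  proof (rule the_equality)
    show "AE x in M. (\<lambda>n. ln (mnorm (cocyc T B n x)) / real n) \<longlonglongrightarrow> ?a" by (rule AE2)
    fix c assume "AE x in M. (\<lambda>n. ln (mnorm (cocyc T B n x)) / real n) \<longlonglongrightarrow> c"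
    with AE2 have "AE x in M. c = ?a" by eventually_elim (rule LIMSEQ_unique)
    then show "c = ?a" by simp
  qed
qed

end

context dom begin

lemma invT_meas: "inv T \<in> measurable M M"
proof -
  have "inv T \<in> measurable borel borel" by (rule borel_measurable_continuous_onI[OF invTcont])
  then show ?thesis using measurable_cong_sets[OF sets_borel sets_borel] by simp
qed

lemma erg_inv: "erg M (inv T)"
proof -
  have inj: "inj T" and surj: "surj T" using bijT by (auto simp: bij_def)
  have TA: "inv T -` A \<inter> space M = T ` A" for A
  proof (intro set_eqI iffI)
    fix x assume "x \<in> inv T -` A \<inter> space M"
    then have "inv T x \<in> A" by simp
    moreover have "x = T (inv T x)" using surj by (simp add: surj_f_inv_f)
    ultimately show "x \<in> T ` A" by blast
  next
    fix x assume "x \<in> T ` A"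
    then obtain a where "a \<in> A" "x = T a" by blast
    then show "x \<in> inv T -` A \<inter> space M" using inj by (simp add: inv_f_f sp)
  qed
  have pre: "T -` (T ` A) = A" for A using inj by (rule inj_vimage_image_eq)
  have "ergodic_mp M (inv T)" unfolding ergodic_mp_def
  proof (intro conjI ballI impI)
    show "inv T \<in> M \<rightarrow>\<^sub>M M" by (rule invT_meas)
  next
    fix A assume A: "A \<in> sets M"
    have TAs: "T ` A \<in> sets M" using measurable_sets[OF invT_meas A] TA by simp
    show "measure M (inv T -` A \<inter> space M) = measure M A" using Tpres[OF TAs] TA pre by simp
  next
    fix A assume A: "A \<in> sets M" and inv: "inv T -` A \<inter> space M = A"
    have "T -` A = A" using inv TA pre by metis
    then show "measure M A = 0 \<or> measure M A = 1" by (rule Terg[OF A])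
  qed
  moreover have "prob_space M" by (rule prob_spaceI[OF emeasure_space_1])
  ultimately show ?thesis by (intro erg.intro erg_axioms.intro) (auto simp: sp)
qed

lemma detB_cont: "continuous_on UNIV (\<lambda>x. det (B x))"
  by (simp only: det_2) (intro continuous_intros Bent)

definition h where "h x = ln (det (B x)) - ln (g x)"

lemma h_cont: "continuous_on UNIV h"
proof -
  have "continuous_on UNIV (\<lambda>x. ln (det (B x)))"
    using detpos by (intro continuous_on_ln detB_cont) (auto simp: less_imp_neq[symmetric])
  then show ?thesis unfolding h_def[abs_def] by (intro continuous_on_diff lng_cont)
qed

lemma hS_cont: "continuous_on UNIV (\<lambda>x. h (inv T x))"
  by (rule continuous_on_compose2[OF h_cont invTcont]) auto

lemma ln_det_cocyc: "ln (det (cocyc T B n y)) = (\<Sum>k<n. ln (det (B ((T^^k) y))))"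
proof -
  have "det (B z) \<noteq> 0" for z using detpos[of z] by simp
  then show ?thesis by (simp add: det_cocyc ln_prod)
qed

lemma sum_reindex_inv:
  "(\<Sum>k<n. h ((T^^k) ((inv T ^^ n) x))) = (\<Sum>i<n. h (inv T ((inv T ^^ i) x)))"
proof -
  have "(\<Sum>k<n. h ((T^^k) ((inv T ^^ n) x))) = (\<Sum>k<n. h ((inv T ^^ (n - k)) x))"
    by (rule sum.cong) (simp_all add: funpow_inv_cancel[OF bijT])
  also have "\<dots> = (\<Sum>k<n. (\<lambda>i. h ((inv T ^^ Suc i) x)) (n - Suc k))"
    by (rule sum.cong) (simp_all add: Suc_diff_Suc)
  also have "\<dots> = (\<Sum>i<n. h ((inv T ^^ Suc i) x))" by (rule sum.nat_diff_reindex)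
  also have "\<dots> = (\<Sum>i<n. h (inv T ((inv T ^^ i) x)))" by simp
  finally show ?thesis .
qed

lemma lyap_minus_eq: "lyap_minus M T B = expectation h"
proof -
  interpret eS: erg M "inv T" by (rule erg_inv)
  let ?a = "expectation h"
  obtain bb where bb: "\<And>x. \<bar>h (inv T x)\<bar> \<le> bb" using cpt_bounded[OF cpt hS_cont] by blast
  have ea: "expectation (\<lambda>x. h (inv T x)) = ?a"
    by (rule eS.integral_T[OF cont_meas[OF h_cont]])
  have AE1: "AE x in M. (\<lambda>n. eS.S (\<lambda>x. h (inv T x)) n x / real n) \<longlonglongrightarrow> ?a"
    using eS.birkhoff[OF cont_meas[OF hS_cont] bb] ea by simp
  have key: "\<bar>ln (inverse (mnorm (cocyc_inv T B n x))) - eS.S (\<lambda>x. h (inv T x)) n x\<bar> \<le> ln 4 + Cl" for n x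
  proof -
    let ?y = "(inv T ^^ n) x"
    let ?A = "cocyc T B n ?y"
    have ci: "cocyc_inv T B n x = matrix_inv ?A" by (rule cocyc_inv_eq[OF bijT detpos])
    have dA: "det ?A > 0" by (rule det_cocyc_pos)
    have i1: "\<bar>ln (inverse (mnorm (matrix_inv ?A))) - (ln (det ?A) - ln (mnorm ?A))\<bar> \<le> ln 4"
      by (rule ln_inv_mnorm[OF dA])
    have i2: "\<bar>ln (mnorm ?A) - ln (G n ?y)\<bar> \<le> Cl" by (rule logb)
    have s1: "ln (det ?A) - ln (G n ?y) = (\<Sum>k<n. h ((T^^k) ?y))"
      unfolding ln_det_cocyc S_lng[symmetric] S_def h_def by (simp add: sum_subtractf)
    have s2: "(\<Sum>k<n. h ((T^^k) ?y)) = eS.S (\<lambda>x. h (inv T x)) n x"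
      unfolding eS.S_def by (rule sum_reindex_inv)
    show ?thesis using i1 i2 s1 s2 unfolding ci abs_le_iff by linarith
  qed
  have AE2: "AE x in M. (\<lambda>n. ln (inverse (mnorm (cocyc_inv T B n x))) / real n) \<longlonglongrightarrow> ?a"
    using AE1
  proof eventually_elim
    case (elim x)
    have d: "(\<lambda>n. (ln (inverse (mnorm (cocyc_inv T B n x))) - eS.S (\<lambda>x. h (inv T x)) n x) / real n) \<longlonglongrightarrow> 0"
      by (rule div_n_null[where C="ln 4 + Cl"]) (rule key)
    have "(\<lambda>n. eS.S (\<lambda>x. h (inv T x)) n x / real n + (ln (inverse (mnorm (cocyc_inv T B n x))) - eS.S (\<lambda>x. h (inv T x)) n x) / real n) \<longlonglongrightarrow> ?a + 0"
      by (rule tendsto_add[OF elim d])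
    then show ?case by (simp add: diff_divide_distrib)
  qed
  show ?thesis unfolding lyap_minus_def
  proof (rule the_equality)
    show "AE x in M. (\<lambda>n. ln (inverse (mnorm (cocyc_inv T B n x))) / real n) \<longlonglongrightarrow> ?a" by (rule AE2)
    fix c assume "AE x in M. (\<lambda>n. ln (inverse (mnorm (cocyc_inv T B n x))) / real n) \<longlonglongrightarrow> c"
    with AE2 have "AE x in M. c = ?a" by eventually_elim (rule LIMSEQ_unique)
    then show "c = ?a" by simp
  qed
qed

end


lemma rot_entries[simp]: "rot t $1$1 = cos t" "rot t $1$2 = - sin t" "rot t $2$1 = sin t" "rot t $2$2 = cos t"
  by (simp_all add: rot_def)

lemma rot0: "rot 0 = mat 1" by (simp add: mat2_eq)

lemma det_rot: "det (rot t) = 1" by (simp add: det_2)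

lemma mv_zero_imp:
  fixes A :: "real^2^2"
  assumes "det A \<noteq> 0" "A *v z = 0" shows "z = 0"
proof -
  have "z = (matrix_inv A ** A) *v z" using matrix_inv_prop(2)[OF assms(1)] by simp
  also have "\<dots> = 0" by (simp add: matrix_vector_mul_assoc[symmetric] assms(2))
  finally show ?thesis .
qed

lemma g_nonzero:
  assumes ds: "dominated_splitting T B E (\<lambda>x. span {vector [w x, 1]})" and d: "det (B x) \<noteq> 0"
  shows "B x $ 2 $ 1 * w x + B x $ 2 $ 2 \<noteq> 0"
proof
  assume H0: "B x $ 2 $ 1 * w x + B x $ 2 $ 2 = 0"
  have "(\<lambda>z. B x *v z) ` span {vector [w x, 1]} = span {vector [w (T x), 1]}"
    using ds by (simp add: dominated_splitting_def)
  then obtain k where k: "B x *v vector [w x, 1] = k *\<^sub>R (vector [w (T x), 1] :: real^2)"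
    using image_span_in by blast
  have "(B x *v vector [w x, 1]) $ 2 = B x $ 2 $ 1 * w x + B x $ 2 $ 2" by (simp add: mvmul2)
  then have "k = 0" using k H0 by simp
  then have "B x *v vector [w x, 1] = 0" using k by simp
  then have "(vector [w x, 1] :: real^2) = 0" by (rule mv_zero_imp[OF d])
  then have "(vector [w x, 1] :: real^2) $ 2 = 0" by simp
  then show False by simp
qed

context dom begin

lemma cont_int: "continuous_on UNIV f \<Longrightarrow> integrable M (f :: 'a \<Rightarrow> real)"
proof -
  assume c: "continuous_on UNIV f"
  obtain b where "\<And>x. \<bar>f x\<bar> \<le> b" using cpt_bounded[OF cpt c] by blast
  then show ?thesis by (intro integrable_const_bound[where B=b] cont_meas[OF c]) auto
qed

lemma lndet_cont: "continuous_on UNIV (\<lambda>x. ln (det (B x)))"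
  using detpos by (intro continuous_on_ln detB_cont) (auto simp: less_imp_neq[symmetric])

lemma res_plus: "lyap_plus M T B = (\<integral>x. ln (B x $2$1 * w x + B x $2$2) \<partial>M)"
  using lyap_plus_eq by (simp add: g_def[abs_def])

lemma res_minus: "lyap_minus M T B = (\<integral>x. ln (det (B x)) \<partial>M) - (\<integral>x. ln (B x $2$1 * w x + B x $2$2) \<partial>M)"
proof -
  have "lyap_minus M T B = (\<integral>x. ln (det (B x)) - ln (g x) \<partial>M)" using lyap_minus_eq by (simp add: h_def[abs_def])
  also have "\<dots> = (\<integral>x. ln (det (B x)) \<partial>M) - (\<integral>x. ln (g x) \<partial>M)"
    by (rule Bochner_Integration.integral_diff[OF cont_int[OF lndet_cont] cont_int[OF lng_cont]])
  finally show ?thesis by (simp add: g_def[abs_def])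
qed

lemma alpha_eq: "B x $1$1 - B x $2$1 * w (T x) = det (B x) / g x"
proof -
  have "(B x *v v x) $ 1 = (g x *\<^sub>R v (T x)) $ 1" by (simp add: Bv)
  then have r: "B x $1$1 * w x + B x $1$2 = g x * w (T x)" by (simp add: mvmul2)
  have "(B x $1$1 - B x $2$1 * w (T x)) * g x = B x $1$1 * g x - B x $2$1 * (g x * w (T x))"
    by (simp add: algebra_simps)
  also have "\<dots> = det (B x)" unfolding r[symmetric] by (simp add: g_def det_2 algebra_simps)
  finally show ?thesis using gpos'[of x] by (simp add: field_simps)
qed

lemma res_alpha: "(\<integral>x. ln (B x $1$1 - B x $2$1 * w (T x)) \<partial>M) =
   (\<integral>x. ln (det (B x)) \<partial>M) - (\<integral>x. ln (B x $2$1 * w x + B x $2$2) \<partial>M)"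
proof -
  have "(\<integral>x. ln (B x $1$1 - B x $2$1 * w (T x)) \<partial>M) = (\<integral>x. ln (det (B x)) - ln (g x) \<partial>M)"
  proof (intro Bochner_Integration.integral_cong refl)
    fix x
    have "det (B x) \<noteq> 0" "g x \<noteq> 0" using detpos[of x] gpos'[of x] by auto
    then show "ln (B x $1$1 - B x $2$1 * w (T x)) = ln (det (B x)) - ln (g x)"
      by (simp add: alpha_eq ln_div)
  qed
  also have "\<dots> = (\<integral>x. ln (det (B x)) \<partial>M) - (\<integral>x. ln (g x) \<partial>M)"
    by (rule Bochner_Integration.integral_diff[OF cont_int[OF lndet_cont] cont_int[OF lng_cont]])
  finally show ?thesis by (simp add: g_def[abs_def])
qed

end

theorem proposition3p2:
  fixes M :: "'a::metric_space measure" and T :: "'a \<Rightarrow> 'a"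
    and H :: "'a \<Rightarrow> real^2^2" and u :: "real \<Rightarrow> 'a \<Rightarrow> real" and \<epsilon>0 :: real
  assumes "compact (UNIV :: 'a set)"
    and "bij T" and "continuous_on UNIV T" and "continuous_on UNIV (inv T)"
    and "prob_space M" and "sets M = sets borel" and "space M = UNIV"
    and "ergodic_mp M T"
    and "continuous_on UNIV H"
    and "\<And>x. det (H x) > 0"
    and "\<And>x. H x $ 1 $ 2 = 0"
    and "\<And>x. H x $ 2 $ 2 > 0"
    and "\<exists>E. dominated_splitting T H E (\<lambda>x. span {axis 2 1})"
    and "\<epsilon>0 > 0"
    and "continuous_on ({-\<epsilon>0<..<\<epsilon>0} \<times> UNIV) (\<lambda>(\<theta>, x). u \<theta> x)"
    and "\<And>x. u 0 x = 0"
    and "\<And>\<theta>. \<bar>\<theta>\<bar> < \<epsilon>0 \<Longrightarrow>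
           \<exists>E. dominated_splitting T (\<lambda>x. H x ** rot \<theta>) E (\<lambda>x. span {vector [u \<theta> x, 1]})"
  shows "\<exists>\<epsilon>>0. \<forall>\<theta>. \<bar>\<theta>\<bar> < \<epsilon> \<longrightarrow>
           lyap_plus M T (\<lambda>x. H x ** rot \<theta>) =
             lyap_plus M T H + lyap_minus M T H
             - (\<integral>x. ln ((H x ** rot \<theta>) $ 1 $ 1 - (H x ** rot \<theta>) $ 2 $ 1 * u \<theta> (T x)) \<partial>M)"
proof -
  note cpt = assms(1) and bijT = assms(2) and invc = assms(4) and ps = assms(5)
    and sb = assms(6) and sp = assms(7) and erg = assms(8) and Hc = assms(9) and dH = assms(10)
    and H22 = assms(12) and e0 = assms(14) and uc = assms(15) and u0 = assms(16) and dsth = assms(17)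
  have ergM: "erg M T" using ps sp erg by (intro erg.intro erg_axioms.intro) auto
  have Hent: "continuous_on UNIV (\<lambda>x. H x $ i $ j)" for i j
    by (intro continuous_on_component Hc)
  have Bent: "continuous_on UNIV (\<lambda>x. (H x ** rot t) $ i $ j)" for t i j
    unfolding mmul2 by (intro continuous_intros Hent)
  have detB: "det (H x ** rot t) = det (H x)" for x t by (simp add: det_mul det_rot)
  have ucx: "continuous_on S (\<lambda>t. u t x)" if "S \<subseteq> {-\<epsilon>0<..<\<epsilon>0}" for S x
  proof -
    have "continuous_on S (\<lambda>t. (\<lambda>(\<theta>, x). u \<theta> x) (t, x))"
      by (rule continuous_on_compose2[OF uc]) (use that in \<open>auto intro!: continuous_intros\<close>)
    then show ?thesis by simp
  qed
  have uct: "continuous_on UNIV (u t)" if "\<bar>t\<bar> < \<epsilon>0" for t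
  proof -
    have "continuous_on UNIV (\<lambda>x. (\<lambda>(\<theta>, x). u \<theta> x) (t, x))"
      by (rule continuous_on_compose2[OF uc]) (use that in \<open>auto intro!: continuous_intros\<close>)
    then show ?thesis by simp
  qed
  have gpos: "(H x ** rot t) $ 2 $ 1 * u t x + (H x ** rot t) $ 2 $ 2 > 0" if t: "\<bar>t\<bar> < \<epsilon>0" for t x
  proof (rule ccontr)
    define f where "f s = (H x ** rot s) $ 2 $ 1 * u s x + (H x ** rot s) $ 2 $ 2" for s
    assume "\<not> ?thesis"
    then have ft: "f t \<le> 0" by (simp add: f_def)
    have fnz: "f s \<noteq> 0" if s: "\<bar>s\<bar> < \<epsilon>0" for s
    proof -
      obtain E where "dominated_splitting T (\<lambda>x. H x ** rot s) E (\<lambda>x. span {vector [u s x, 1]})"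
        using dsth[OF s] by blast
      then show ?thesis unfolding f_def by (rule g_nonzero) (simp add: detB dH less_imp_neq[symmetric])
    qed
    have f0: "f 0 > 0" using H22[of x] by (simp add: f_def rot0 u0)
    have fe: "f s = (H x $2$1 * cos s + H x $2$2 * sin s) * u s x + (H x $2$1 * (- sin s) + H x $2$2 * cos s)" for s
      by (simp add: f_def mmul2)
    have fc: "continuous_on {a..b} f" if "-\<epsilon>0 < a" "b < \<epsilon>0" for a b
    proof -
      have "continuous_on {a..b} (\<lambda>t. u t x)" by (rule ucx) (use that in auto)
      then show ?thesis unfolding fe[abs_def] by (intro continuous_intros)
    qed
    show False
    proof (cases "t \<ge> 0")
      case True
      obtain s where s: "0 \<le> s" "s \<le> t" "f s = 0"
      proof -
        have "t < \<epsilon>0" using t by (simp add: abs_less_iff)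
        then have "\<exists>s. 0 \<le> s \<and> s \<le> t \<and> f s = 0"
          using IVT2'[of f t 0 0, OF ft less_imp_le[OF f0] True fc] e0 by simp
        then show ?thesis using that by blast
      qed
      then show False using fnz[of s] t by auto
    next
      case False
      obtain s where s: "t \<le> s" "s \<le> 0" "f s = 0"
      proof -
        have "- \<epsilon>0 < t" using t by (simp add: abs_less_iff)
        then have "\<exists>s. t \<le> s \<and> s \<le> 0 \<and> f s = 0"
          using IVT'[of f t 0 0, OF ft less_imp_le[OF f0] _ fc] e0 False by simp
        then show ?thesis using that by blast
      qed
      then show False using fnz[of s] t by auto
    qed
  qed
  have domt: "\<exists>E. dom M T (\<lambda>x. H x ** rot t) (u t) E" if t: "\<bar>t\<bar> < \<epsilon>0" for t
  proof -
    obtain E where E: "dominated_splitting T (\<lambda>x. H x ** rot t) E (\<lambda>x. span {vector [u t x, 1]})"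
      using dsth[OF t] by blast
    have "dom M T (\<lambda>x. H x ** rot t) (u t) E"
      using cpt bijT invc sb Bent E gpos[OF t] uct[OF t] dH
      by (intro dom.intro ergM dom_axioms.intro) (auto simp: detB)
    then show ?thesis by blast
  qed
  have Hrot0: "(\<lambda>x. H x ** rot 0) = H" by (simp add: rot0)
  show ?thesis
  proof (intro exI[of _ \<epsilon>0] conjI allI impI e0)
    fix t :: real assume t: "\<bar>t\<bar> < \<epsilon>0"
    obtain E where D: "dom M T (\<lambda>x. H x ** rot t) (u t) E" using domt[OF t] by blast
    obtain E0 where D0': "dom M T (\<lambda>x. H x ** rot 0) (u 0) E0" using domt[of 0] e0 by auto
    then have D0: "dom M T H (u 0) E0" by (simp only: Hrot0)
    have p: "lyap_plus M T (\<lambda>x. H x ** rot t) = (\<integral>x. ln ((H x ** rot t) $2$1 * u t x + (H x ** rot t) $2$2) \<partial>M)"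
      by (rule dom.res_plus[OF D])
    have p0: "lyap_plus M T H = (\<integral>x. ln (H x $2$1 * u 0 x + H x $2$2) \<partial>M)"
      by (rule dom.res_plus[OF D0])
    have m0: "lyap_minus M T H = (\<integral>x. ln (det (H x)) \<partial>M) - (\<integral>x. ln (H x $2$1 * u 0 x + H x $2$2) \<partial>M)"
      by (rule dom.res_minus[OF D0])
    have a: "(\<integral>x. ln ((H x ** rot t) $1$1 - (H x ** rot t) $2$1 * u t (T x)) \<partial>M) =
       (\<integral>x. ln (det (H x ** rot t)) \<partial>M) - (\<integral>x. ln ((H x ** rot t) $2$1 * u t x + (H x ** rot t) $2$2) \<partial>M)"
      by (rule dom.res_alpha[OF D])
    show "lyap_plus M T (\<lambda>x. H x ** rot t) =
             lyap_plus M T H + lyap_minus M T H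
             - (\<integral>x. ln ((H x ** rot t) $ 1 $ 1 - (H x ** rot t) $ 2 $ 1 * u t (T x)) \<partial>M)"
      using p p0 m0 a by (simp add: detB)
  qed
qed


end
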